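(* Let $n\ge 2$ be an integer. For $i=1,2$ let $X_{i1},\dots,X_{in}$ be a random sample from the density $\frac{1}{\sigma}e^{-(x-\mu_i)/\sigma}$, $x\ge\mu_i$, the two samples independent, $\underline{\theta}=(\mu_1,\mu_2,\sigma)\in\mathbb{R}^2\times(0,\infty)$. Let $X_i=\min_jX_{ij}$, $S=\sum_{i=1}^2\sum_{j=1}^n(X_{ij}-X_i)$, $Z_1=\min\{X_1,X_2\}$, $Z_2=\max\{X_1,X_2\}$, $W=\frac{Z_2-Z_1}{S}$, $V=\frac{S}{\sigma}$, $\mu_M=\mu_1I(X_1\ge X_2)+\mu_2I(X_1<X_2)$, $U'=\frac{Z_1-\mu_M}{\sigma}$, and $\mu=n(\max\{\mu_1,\mu_2\}-\min\{\mu_1,\mu_2\})/\sigma$. Let $f_{1,\underline{\theta}}$ denote the probability density function of $W$. Then for each fixed $w\in(0,\infty)$, the conditional density of $(U',V)$ given $W=w$ is $$f_{3,\underline{\theta}}(u,v\mid w)=\begin{cases}\dfrac{n^2}{\Gamma(2(n-1))f_{1,\underline{\theta}}(w)}v^{2n-2}e^{-v(1+nw)}e^{-2nu}e^{-\mu}, & \text{if } -\tfrac{\mu}{n}<u<0,\ -\tfrac{u}{w}<v<\infty,\ \text{or } 0<u<\tfrac{\mu}{n},\ 0<v<\infty,\\[2mm] \dfrac{n^2}{\Gamma(2(n-1))f_{1,\underline{\theta}}(w)}v^{2n-2}e^{-v(1+nw)}e^{-2nu}\left(e^{-\mu}+e^{\mu}\right), & \text{if } \tfrac{\mu}{n}<u<\infty,\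 0<v<\infty,\end{cases}$$ and $0$ otherwise.
   Context: $I(A)$ is the indicator of $A$; $\Gamma$ is the gamma function. *)

theory Defs
  imports "HOL-Probability.Probability" "HOL-Analysis.Analysis"
begin

definition shexp_density :: "real \<Rightarrow> real \<Rightarrow> real \<Rightarrow> real" where
  "shexp_density m s x = (if x \<ge> m then exp (-(x - m) / s) / s else 0)"

definition Xmin :: "(nat \<Rightarrow> nat \<Rightarrow> 'a \<Rightarrow> real) \<Rightarrow> nat \<Rightarrow> nat \<Rightarrow> 'a \<Rightarrow> real" where
  "Xmin X n i \<omega> = Min ((\<lambda>j. X i j \<omega>) ` {1..n})"

definition Sstat :: "(nat \<Rightarrow> nat \<Rightarrow> 'a \<Rightarrow> real) \<Rightarrow> nat \<Rightarrow> 'a \<Rightarrow> real" where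
  "Sstat X n \<omega> = (\<Sum>i\<in>{1,2}. \<Sum>j=1..n. (X i j \<omega> - Xmin X n i \<omega>))"

definition Z1 :: "(nat \<Rightarrow> nat \<Rightarrow> 'a \<Rightarrow> real) \<Rightarrow> nat \<Rightarrow> 'a \<Rightarrow> real" where
  "Z1 X n \<omega> = min (Xmin X n 1 \<omega>) (Xmin X n 2 \<omega>)"

definition Z2 :: "(nat \<Rightarrow> nat \<Rightarrow> 'a \<Rightarrow> real) \<Rightarrow> nat \<Rightarrow> 'a \<Rightarrow> real" where
  "Z2 X n \<omega> = max (Xmin X n 1 \<omega>) (Xmin X n 2 \<omega>)"

definition Wstat :: "(nat \<Rightarrow> nat \<Rightarrow> 'a \<Rightarrow> real) \<Rightarrow> nat \<Rightarrow> 'a \<Rightarrow> real" where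
  "Wstat X n \<omega> = (Z2 X n \<omega> - Z1 X n \<omega>) / Sstat X n \<omega>"

definition Vstat :: "(nat \<Rightarrow> nat \<Rightarrow> 'a \<Rightarrow> real) \<Rightarrow> nat \<Rightarrow> real \<Rightarrow> 'a \<Rightarrow> real" where
  "Vstat X n \<sigma> \<omega> = Sstat X n \<omega> / \<sigma>"

definition muM :: "(nat \<Rightarrow> nat \<Rightarrow> 'a \<Rightarrow> real) \<Rightarrow> nat \<Rightarrow> real \<Rightarrow> real \<Rightarrow> 'a \<Rightarrow> real" where
  "muM X n \<mu>1 \<mu>2 \<omega> =
     \<mu>1 * (if Xmin X n 1 \<omega> \<ge> Xmin X n 2 \<omega> then 1 else 0)
   + \<mu>2 * (if Xmin X n 1 \<omega> < Xmin X n 2 \<omega> then 1 else 0)"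

definition Uprime :: "(nat \<Rightarrow> nat \<Rightarrow> 'a \<Rightarrow> real) \<Rightarrow> nat \<Rightarrow> real \<Rightarrow> real \<Rightarrow> real \<Rightarrow> 'a \<Rightarrow> real" where
  "Uprime X n \<mu>1 \<mu>2 \<sigma> \<omega> = (Z1 X n \<omega> - muM X n \<mu>1 \<mu>2 \<omega>) / \<sigma>"

definition mu_par :: "nat \<Rightarrow> real \<Rightarrow> real \<Rightarrow> real \<Rightarrow> real" where
  "mu_par n \<mu>1 \<mu>2 \<sigma> = real n * (max \<mu>1 \<mu>2 - min \<mu>1 \<mu>2) / \<sigma>"

text \<open>The claimed conditional density f_3(u,v | w) of (U',V) given W = w,
  where f1w is the value f_1(w) of the density of W; 0 outside w > 0.\<close>
definition cond_dens3 :: "nat \<Rightarrow> real \<Rightarrow> real \<Rightarrow> real \<Rightarrow> real \<Rightarrow> real \<Rightarrow> real" where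
  "cond_dens3 n \<mu> f1w u v w =
    (let c = real n ^ 2 / (Gamma (2 * (real n - 1)) * f1w)
             * v ^ (2*n - 2) * exp (- v * (1 + real n * w)) * exp (- 2 * real n * u)
     in if w > 0 \<and> ((- \<mu> / real n < u \<and> u < 0 \<and> - u / w < v) \<or> (0 < u \<and> u < \<mu> / real n \<and> 0 < v))
        then c * exp (- \<mu>)
        else if w > 0 \<and> \<mu> / real n < u \<and> 0 < v
        then c * (exp (- \<mu>) + exp \<mu>)
        else 0)"

end

theory Submission
  imports Defs
begin


definition QM :: "nat \<Rightarrow> real \<Rightarrow> real measure" where
  "QM k \<sigma> = (if k = 1 \<or> \<sigma> \<le> 0 then return lborel 0
     else density lborel (\<lambda>t. ennreal (erlang_density (k - 2) (1/\<sigma>) t)))"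

lemma sets_QM[measurable_cong, simp]: "sets (QM k \<sigma>) = sets borel"
  by (simp add: QM_def)

lemma QM_integral_1: "\<sigma> > 0 \<Longrightarrow> f \<in> borel_measurable borel \<Longrightarrow> (\<integral>\<^sup>+t. f t \<partial>QM 1 \<sigma>) = f 0"
  by (simp add: QM_def nn_integral_return)

lemma QM_integral_ge2: "\<sigma> > 0 \<Longrightarrow> k \<ge> 2 \<Longrightarrow> f \<in> borel_measurable borel \<Longrightarrow>
  (\<integral>\<^sup>+t. f t \<partial>QM k \<sigma>) = (\<integral>\<^sup>+t. ennreal (erlang_density (k - 2) (1/\<sigma>) t) * f t \<partial>lborel)"
  by (simp add: QM_def nn_integral_density)

lemma sigma_finite_QM: "sigma_finite_measure (QM k \<sigma>)"
proof -
  show ?thesis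
  proof (cases "k = 1 \<or> \<sigma> \<le> 0")
    case True
    then have "prob_space (QM k \<sigma>)" by (simp add: QM_def prob_space_return)
    then show ?thesis by (simp add: prob_space_imp_sigma_finite)
  next
    case False
    then have "prob_space (QM k \<sigma>)" by (simp add: QM_def prob_space_erlang_density)
    then show ?thesis by (simp add: prob_space_imp_sigma_finite)
  qed
qed

lemma Conv:
  assumes k: "k \<ge> 1" and s: "\<sigma> > 0" and [measurable]: "\<phi> \<in> borel_measurable borel"
  shows "(\<integral>\<^sup>+t. \<integral>\<^sup>+r. ennreal (erlang_density 0 (1/\<sigma>) r) * \<phi> (t + r) \<partial>lborel \<partial>QM k \<sigma>)
       = (\<integral>\<^sup>+s. \<phi> s \<partial>QM (Suc k) \<sigma>)"
proof (cases "k = 1")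
  case True
  have "(\<integral>\<^sup>+t. \<integral>\<^sup>+r. ennreal (erlang_density 0 (1/\<sigma>) r) * \<phi> (t + r) \<partial>lborel \<partial>QM 1 \<sigma>)
     = (\<integral>\<^sup>+r. ennreal (erlang_density 0 (1/\<sigma>) r) * \<phi> (0 + r) \<partial>lborel)"
    by (rule QM_integral_1[OF s]) measurable
  also have "\<dots> = (\<integral>\<^sup>+s. \<phi> s \<partial>QM (Suc 1) \<sigma>)"
    using s by (subst QM_integral_ge2) auto
  finally show ?thesis using True by simp
next
  case False
  then have k2: "k \<ge> 2" using k by simp
  let ?E = "\<lambda>r. ennreal (erlang_density 0 (1/\<sigma>) r)"
  let ?e = "\<lambda>t. ennreal (erlang_density (k - 2) (1/\<sigma>) t)"
  have "(\<integral>\<^sup>+t. \<integral>\<^sup>+r. ?E r * \<phi> (t + r) \<partial>lborel \<partial>QM k \<sigma>)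
      = (\<integral>\<^sup>+t. ?e t * \<integral>\<^sup>+r. ?E r * \<phi> (t + r) \<partial>lborel \<partial>lborel)"
    by (rule QM_integral_ge2[OF s k2]) measurable
  also have "\<dots> = (\<integral>\<^sup>+t. \<integral>\<^sup>+s. ?e t * (?E (s - t) * \<phi> s) \<partial>lborel \<partial>lborel)"
  proof (rule nn_integral_cong)
    fix t :: real
    have "(\<integral>\<^sup>+s. ?E (s - t) * \<phi> s \<partial>lborel) = (\<integral>\<^sup>+r. ?E (t + r - t) * \<phi> (t + r) \<partial>lborel)"
      using nn_integral_real_affine[of "\<lambda>s. ?E (s - t) * \<phi> s" 1 t] by simp
    then show "?e t * (\<integral>\<^sup>+r. ?E r * \<phi> (t + r) \<partial>lborel) = (\<integral>\<^sup>+s. ?e t * (?E (s - t) * \<phi> s) \<partial>lborel)"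
      by (simp add: nn_integral_cmult)
  qed
  also have "\<dots> = (\<integral>\<^sup>+s. \<integral>\<^sup>+t. ?e t * (?E (s - t) * \<phi> s) \<partial>lborel \<partial>lborel)"
    by (rule lborel_pair.Fubini'[symmetric]) measurable
  also have "\<dots> = (\<integral>\<^sup>+s. ennreal (erlang_density (Suc k - 2) (1/\<sigma>) s) * \<phi> s \<partial>lborel)"
  proof (rule nn_integral_cong)
    fix s :: real
    have "(\<integral>\<^sup>+t. ?e t * (?E (s - t) * \<phi> s) \<partial>lborel) = (\<integral>\<^sup>+t. ?E (s - t) * ?e t \<partial>lborel) * \<phi> s"
      by (subst nn_integral_multc[symmetric]) (auto intro!: nn_integral_cong simp: mult_ac)
    also have "\<dots> = ennreal (erlang_density (Suc 0 + Suc (k - 2) - 1) (1/\<sigma>) s) * \<phi> s"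
      using convolution_erlang_density[of "1/\<sigma>" 0 "k-2"] s by (simp add: fun_eq_iff)
    also have "Suc 0 + Suc (k - 2) - 1 = Suc k - 2" using k2 by simp
    finally show "(\<integral>\<^sup>+t. ?e t * (?E (s - t) * \<phi> s) \<partial>lborel) = ennreal (erlang_density (Suc k - 2) (1/\<sigma>) s) * \<phi> s" .
  qed
  also have "\<dots> = (\<integral>\<^sup>+s. \<phi> s \<partial>QM (Suc k) \<sigma>)"
    using k2 s by (subst QM_integral_ge2) auto
  finally show ?thesis .
qed

interpretation QMsf: sigma_finite_measure "QM k \<sigma>" for k \<sigma>
  by (rule sigma_finite_QM)

lemma meas_nn_QM[measurable (raw)]:
  "case_prod f \<in> borel_measurable (N \<Otimes>\<^sub>M QM k \<sigma>) \<Longrightarrow> (\<lambda>x. \<integral>\<^sup>+y. f x y \<partial>QM k \<sigma>) \<in> borel_measurable N"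
  by (rule QMsf.borel_measurable_nn_integral)

lemma QM_swap:
  assumes [measurable]: "case_prod \<psi> \<in> borel_measurable (borel \<Otimes>\<^sub>M borel)"
  shows "(\<integral>\<^sup>+t. \<integral>\<^sup>+y. \<psi> y t \<partial>lborel \<partial>QM k \<sigma>) = (\<integral>\<^sup>+y. \<integral>\<^sup>+t. \<psi> y t \<partial>QM k \<sigma> \<partial>lborel)"
proof -
  interpret p: pair_sigma_finite lborel "QM k \<sigma>"
    by (intro pair_sigma_finite.intro sigma_finite_QM) (rule lborel.sigma_finite_measure_axioms)
  show ?thesis by (rule p.Fubini') measurable
qed



definition hk :: "nat \<Rightarrow> real \<Rightarrow> real \<Rightarrow> real \<Rightarrow> real" where
  "hk k a \<sigma> m = (if a \<le> m then real k / \<sigma> * exp (- real k * (m - a) / \<sigma>) else 0)"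

lemma hk_measurable[measurable]: "hk k a \<sigma> \<in> borel_measurable borel"
  unfolding hk_def by measurable

lemma hk_nonneg: "\<sigma> > 0 \<Longrightarrow> hk k a \<sigma> m \<ge> 0"
  by (simp add: hk_def)

lemma hk1: "hk 1 a \<sigma> m = shexp_density a \<sigma> m"
  by (simp add: hk_def shexp_density_def)

lemma shexp_measurable[measurable]: "shexp_density a \<sigma> \<in> borel_measurable borel"
  unfolding shexp_density_def by measurable

lemma shexp_nonneg: "\<sigma> > 0 \<Longrightarrow> shexp_density a \<sigma> m \<ge> 0"
  by (simp add: shexp_density_def)

lemma hk_exp1: "\<sigma> > 0 \<Longrightarrow> hk k a \<sigma> m * exp (-(m-a)/\<sigma>) = real k / real (Suc k) * hk (Suc k) a \<sigma> m"
proof -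
  assume s: "\<sigma> > 0"
  have e: "exp (- real k * (m - a) / \<sigma>) * exp (-(m-a)/\<sigma>) = exp (- real (Suc k) * (m - a) / \<sigma>)"
    unfolding exp_add[symmetric] using s by (intro arg_cong[where f=exp]) (simp add: field_simps)
  show ?thesis unfolding hk_def using s e
    by (auto simp del: of_nat_Suc)
qed

lemma shexp_exp: "\<sigma> > 0 \<Longrightarrow> shexp_density a \<sigma> y * exp (- real k * (y - a) / \<sigma>) = 1 / real (Suc k) * hk (Suc k) a \<sigma> y"
proof -
  assume s: "\<sigma> > 0"
  have e: "exp (-(y - a) / \<sigma>) * exp (- real k * (y - a) / \<sigma>) = exp (- real (Suc k) * (y - a) / \<sigma>)"
    unfolding exp_add[symmetric] using s by (intro arg_cong[where f=exp]) (simp add: field_simps)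
  show ?thesis unfolding hk_def shexp_density_def using s e
    by (auto simp del: of_nat_Suc)
qed

lemma shexp_shift: "\<sigma> > 0 \<Longrightarrow> a \<le> m \<Longrightarrow>
   shexp_density a \<sigma> (m + r) * indicator {m..} (m + r) = exp (-(m-a)/\<sigma>) * erlang_density 0 (1/\<sigma>) r"
  by (auto simp: shexp_density_def erlang_density_def field_simps indicator_def simp flip: exp_add)

lemma hk_shift: "\<sigma> > 0 \<Longrightarrow> a \<le> y \<Longrightarrow> k > 0 \<Longrightarrow> r \<noteq> 0 \<Longrightarrow>
   indicator {y<..} (y + r / real k) * hk k a \<sigma> (y + r / real k) = real k * exp (- real k * (y - a) / \<sigma>) * erlang_density 0 (1/\<sigma>) r"
proof -
  assume s: "\<sigma> > 0" and ay: "a \<le> y" and k: "k > 0" and r: "r \<noteq> 0"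
  have e: "exp (- real k * (y + r / real k - a) / \<sigma>) = exp (- real k * (y - a) / \<sigma>) * exp (- (1/\<sigma>) * r)"
    unfolding exp_add[symmetric] using k s by (intro arg_cong[where f=exp]) (simp add: field_simps)
  show ?thesis
  proof (cases "r < 0")
    case True
    then have "\<not> y < y + r / real k" using k by (simp add: divide_less_0_iff zero_less_divide_iff)
    then show ?thesis using True by (simp add: erlang_density_def)
  next
    case False
    then have r0: "r > 0" using r by simp
    then have "y < y + r / real k" using k by simp
    moreover have "a \<le> y + r / real k" using ay r0 k by (smt (verit) divide_pos_pos of_nat_0_less_iff)
    ultimately show ?thesis using False e s k unfolding hk_def erlang_density_def by (simp add: indicator_def)
  qed
qed

lemma pred_atLeast[measurable (raw)]:
  "f \<in> borel_measurable M \<Longrightarrow> g \<in> borel_measurable M \<Longrightarrow> Measurable.pred M (\<lambda>x. (f x::real) \<in> {g x..})"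
  by (simp add: atLeast_iff) measurable
lemma pred_lessThan[measurable (raw)]:
  "f \<in> borel_measurable M \<Longrightarrow> g \<in> borel_measurable M \<Longrightarrow> Measurable.pred M (\<lambda>x. (f x::real) \<in> {..<g x})"
  by (simp add: lessThan_iff) measurable
lemma pred_greaterThan[measurable (raw)]:
  "f \<in> borel_measurable M \<Longrightarrow> g \<in> borel_measurable M \<Longrightarrow> Measurable.pred M (\<lambda>x. (f x::real) \<in> {g x<..})"
  by (simp add: greaterThan_iff) measurable

lemma lemA:
  fixes J :: "'i set" and a \<sigma> :: real
  assumes "finite J" "J \<noteq> {}" and s: "\<sigma> > 0"
    and D: "prob_space (density lborel (\<lambda>x. ennreal (shexp_density a \<sigma> x)))"
  shows "g \<in> borel_measurable (borel \<Otimes>\<^sub>M borel) \<Longrightarrow>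
   (\<integral>\<^sup>+x. g (Min (x ` J), \<Sum>j\<in>J. (x j - Min (x ` J))) \<partial>PiM J (\<lambda>_. density lborel (\<lambda>x. ennreal (shexp_density a \<sigma> x))))
   = (\<integral>\<^sup>+m. ennreal (hk (card J) a \<sigma> m) * (\<integral>\<^sup>+t. g (m,t) \<partial>QM (card J) \<sigma>) \<partial>lborel)"
  using assms(1,2)
proof (induction J arbitrary: g rule: finite_ne_induct)
  let ?D = "density lborel (\<lambda>x. ennreal (shexp_density a \<sigma> x))"
  interpret ps: product_sigma_finite "\<lambda>_. ?D"
    by (simp add: product_sigma_finite_def prob_space_imp_sigma_finite D)
  case (singleton i)
  note [measurable] = singleton(1)
  have "(\<integral>\<^sup>+x. g (Min (x ` {i}), \<Sum>j\<in>{i}. (x j - Min (x ` {i}))) \<partial>PiM {i} (\<lambda>_. ?D))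
      = (\<integral>\<^sup>+x. (\<lambda>y. g (y, 0)) (x i) \<partial>PiM {i} (\<lambda>_. ?D))"
    by simp
  also have "\<dots> = (\<integral>\<^sup>+y. g (y, 0) \<partial>?D)"
    by (rule ps.product_nn_integral_singleton) measurable
  also have "\<dots> = (\<integral>\<^sup>+y. ennreal (shexp_density a \<sigma> y) * g (y, 0) \<partial>lborel)"
    by (rule nn_integral_density) auto
  also have "\<dots> = (\<integral>\<^sup>+m. ennreal (hk (card {i}) a \<sigma> m) * (\<integral>\<^sup>+t. g (m,t) \<partial>QM (card {i}) \<sigma>) \<partial>lborel)"
  proof -
    have "(\<integral>\<^sup>+t. g (m,t) \<partial>QM 1 \<sigma>) = g (m, 0)" for m
      by (rule QM_integral_1[OF s]) measurable
    then show ?thesis using hk1[of a \<sigma>] by simp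
  qed
  finally show ?case .
next
  let ?D = "density lborel (\<lambda>x. ennreal (shexp_density a \<sigma> x))"
  interpret ps: product_sigma_finite "\<lambda>_. ?D"
    by (simp add: product_sigma_finite_def prob_space_imp_sigma_finite D)
  case (insert i J)
  note g[measurable] = insert(5)
  define k where "k = card J"
  have k1: "k \<ge> 1" using insert(1,2) by (simp add: k_def Suc_le_eq card_gt_0_iff)
  have cardi: "card (insert i J) = Suc k" using insert by (simp add: k_def)
  define G where "G = (\<lambda>m t. \<integral>\<^sup>+y. ennreal (shexp_density a \<sigma> y) *
      g (min y m, t + real k * (m - min y m) + (y - min y m)) \<partial>lborel)"
  have G_meas[measurable]: "(\<lambda>p. G (fst p) (snd p)) \<in> borel_measurable (borel \<Otimes>\<^sub>M borel)"
    unfolding G_def by measurable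
  have step1: "(\<integral>\<^sup>+x. g (Min (x ` insert i J), \<Sum>j\<in>insert i J. (x j - Min (x ` insert i J))) \<partial>PiM (insert i J) (\<lambda>_. ?D))
     = (\<integral>\<^sup>+x. G (Min (x ` J)) (\<Sum>j\<in>J. (x j - Min (x ` J))) \<partial>PiM J (\<lambda>_. ?D))"
  proof -
    have "(\<integral>\<^sup>+x. g (Min (x ` insert i J), \<Sum>j\<in>insert i J. (x j - Min (x ` insert i J))) \<partial>PiM (insert i J) (\<lambda>_. ?D))
      = (\<integral>\<^sup>+x. \<integral>\<^sup>+y. g (Min ((x(i:=y)) ` insert i J), \<Sum>j\<in>insert i J. ((x(i:=y)) j - Min ((x(i:=y)) ` insert i J))) \<partial>?D \<partial>PiM J (\<lambda>_. ?D))"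
      using insert(1,3) by (intro ps.product_nn_integral_insert) measurable
    also have "\<dots> = (\<integral>\<^sup>+x. G (Min (x ` J)) (\<Sum>j\<in>J. (x j - Min (x ` J))) \<partial>PiM J (\<lambda>_. ?D))"
    proof (rule nn_integral_cong)
      fix x :: "'i \<Rightarrow> real"
      define m where "m = Min (x ` J)"
      have img: "(x(i:=y)) ` insert i J = insert y (x ` J)" for y
        using insert(3) by auto
      have mn: "Min ((x(i:=y)) ` insert i J) = min y m" for y
        unfolding img m_def using insert(1,2) by (simp add: Min_insert)
      have sm: "(\<Sum>j\<in>insert i J. ((x(i:=y)) j - min y m)) = (\<Sum>j\<in>J. (x j - m)) + real k * (m - min y m) + (y - min y m)" for y
      proof -
        have "(\<Sum>j\<in>insert i J. ((x(i:=y)) j - min y m)) = (y - min y m) + (\<Sum>j\<in>J. ((x(i:=y)) j - min y m))"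
          using insert(1,3) by simp
        also have "(\<Sum>j\<in>J. ((x(i:=y)) j - min y m)) = (\<Sum>j\<in>J. ((x j - m) + (m - min y m)))"
          using insert(3) by (intro sum.cong) auto
        also have "\<dots> = (\<Sum>j\<in>J. (x j - m)) + real k * (m - min y m)"
          by (simp add: sum.distrib sum_subtractf k_def algebra_simps)
        finally show ?thesis by simp
      qed
      show "(\<integral>\<^sup>+y. g (Min ((x(i:=y)) ` insert i J), \<Sum>j\<in>insert i J. ((x(i:=y)) j - Min ((x(i:=y)) ` insert i J))) \<partial>?D)
          = G (Min (x ` J)) (\<Sum>j\<in>J. (x j - Min (x ` J)))"
        unfolding mn sm G_def m_def[symmetric]
        by (rule nn_integral_density) measurable
    qed
    finally show ?thesis .
  qed
  have step2: "(\<integral>\<^sup>+x. G (Min (x ` J)) (\<Sum>j\<in>J. (x j - Min (x ` J))) \<partial>PiM J (\<lambda>_. ?D))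
      = (\<integral>\<^sup>+m. ennreal (hk k a \<sigma> m) * (\<integral>\<^sup>+t. G m t \<partial>QM k \<sigma>) \<partial>lborel)"
    using insert(4)[OF G_meas] by (simp add: k_def)
  define P1 where "P1 = (\<lambda>m t. \<integral>\<^sup>+y. ennreal (shexp_density a \<sigma> y) * indicator {m..} y * g (m, t + (y - m)) \<partial>lborel)"
  define P2 where "P2 = (\<lambda>m t. \<integral>\<^sup>+y. ennreal (shexp_density a \<sigma> y) * indicator {..<m} y * g (y, t + real k * (m - y)) \<partial>lborel)"
  have P1_meas[measurable]: "case_prod P1 \<in> borel_measurable (borel \<Otimes>\<^sub>M borel)"
    unfolding P1_def by measurable
  have P2_meas[measurable]: "case_prod P2 \<in> borel_measurable (borel \<Otimes>\<^sub>M borel)"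
    unfolding P2_def by measurable
  have iP1_meas[measurable]: "(\<lambda>m. \<integral>\<^sup>+t. P1 m t \<partial>QM k \<sigma>) \<in> borel_measurable borel"
    by (rule meas_nn_QM) measurable
  have iP2_meas[measurable]: "(\<lambda>m. \<integral>\<^sup>+t. P2 m t \<partial>QM k \<sigma>) \<in> borel_measurable borel"
    by (rule meas_nn_QM) measurable
  have G_split: "G m t = P1 m t + P2 m t" for m t
    unfolding G_def P1_def P2_def
    by (subst nn_integral_add[symmetric]) (auto intro!: nn_integral_cong simp: indicator_def min_def distrib_left)
  have step4: "(\<integral>\<^sup>+m. ennreal (hk k a \<sigma> m) * (\<integral>\<^sup>+t. G m t \<partial>QM k \<sigma>) \<partial>lborel)
     = (\<integral>\<^sup>+m. ennreal (hk k a \<sigma> m) * (\<integral>\<^sup>+t. P1 m t \<partial>QM k \<sigma>) \<partial>lborel)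
     + (\<integral>\<^sup>+m. ennreal (hk k a \<sigma> m) * (\<integral>\<^sup>+t. P2 m t \<partial>QM k \<sigma>) \<partial>lborel)"
  proof -
    have "(\<integral>\<^sup>+t. G m t \<partial>QM k \<sigma>) = (\<integral>\<^sup>+t. P1 m t \<partial>QM k \<sigma>) + (\<integral>\<^sup>+t. P2 m t \<partial>QM k \<sigma>)" for m
      unfolding G_split by (rule nn_integral_add) measurable
    then have "(\<integral>\<^sup>+m. ennreal (hk k a \<sigma> m) * (\<integral>\<^sup>+t. G m t \<partial>QM k \<sigma>) \<partial>lborel)
       = (\<integral>\<^sup>+m. ennreal (hk k a \<sigma> m) * (\<integral>\<^sup>+t. P1 m t \<partial>QM k \<sigma>) + ennreal (hk k a \<sigma> m) * (\<integral>\<^sup>+t. P2 m t \<partial>QM k \<sigma>) \<partial>lborel)"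
      by (simp add: distrib_left)
    also have "\<dots> = (\<integral>\<^sup>+m. ennreal (hk k a \<sigma> m) * (\<integral>\<^sup>+t. P1 m t \<partial>QM k \<sigma>) \<partial>lborel)
     + (\<integral>\<^sup>+m. ennreal (hk k a \<sigma> m) * (\<integral>\<^sup>+t. P2 m t \<partial>QM k \<sigma>) \<partial>lborel)"
      by (rule nn_integral_add) measurable
    finally show ?thesis .
  qed
  have part1: "(\<integral>\<^sup>+m. ennreal (hk k a \<sigma> m) * (\<integral>\<^sup>+t. P1 m t \<partial>QM k \<sigma>) \<partial>lborel)
     = (\<integral>\<^sup>+m. ennreal (real k / real (Suc k)) * (ennreal (hk (Suc k) a \<sigma> m) * (\<integral>\<^sup>+t. g (m,t) \<partial>QM (Suc k) \<sigma>)) \<partial>lborel)"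
  proof (rule nn_integral_cong)
    fix m :: real
    show "ennreal (hk k a \<sigma> m) * (\<integral>\<^sup>+t. P1 m t \<partial>QM k \<sigma>)
       = ennreal (real k / real (Suc k)) * (ennreal (hk (Suc k) a \<sigma> m) * (\<integral>\<^sup>+t. g (m,t) \<partial>QM (Suc k) \<sigma>))"
    proof (cases "a \<le> m")
      case False
      then show ?thesis by (simp add: hk_def)
    next
      case True
      have P1e: "P1 m t = ennreal (exp (-(m-a)/\<sigma>)) * (\<integral>\<^sup>+r. ennreal (erlang_density 0 (1/\<sigma>) r) * g (m, t + r) \<partial>lborel)" for t
      proof -
        have "P1 m t = (\<integral>\<^sup>+r. ennreal (shexp_density a \<sigma> (m + r)) * indicator {m..} (m + r) * g (m, t + (m + r - m)) \<partial>lborel)"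
          unfolding P1_def using nn_integral_real_affine[of "\<lambda>y. ennreal (shexp_density a \<sigma> y) * indicator {m..} y * g (m, t + (y - m))" 1 m]
          by simp
        also have "\<dots> = (\<integral>\<^sup>+r. ennreal (exp (-(m-a)/\<sigma>)) * (ennreal (erlang_density 0 (1/\<sigma>) r) * g (m, t + r)) \<partial>lborel)"
        proof (rule nn_integral_cong)
          fix r :: real
          have "ennreal (shexp_density a \<sigma> (m + r)) * indicator {m..} (m + r) = ennreal (shexp_density a \<sigma> (m + r) * indicator {m..} (m + r))"
            by (simp add: indicator_def)
          also have "\<dots> = ennreal (exp (-(m-a)/\<sigma>) * erlang_density 0 (1/\<sigma>) r)"
            using shexp_shift[OF s True] by simp
          also have "\<dots> = ennreal (exp (-(m-a)/\<sigma>)) * ennreal (erlang_density 0 (1/\<sigma>) r)"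
            using s by (intro ennreal_mult) auto
          finally show "ennreal (shexp_density a \<sigma> (m + r)) * indicator {m..} (m + r) * g (m, t + (m + r - m))
              = ennreal (exp (-(m-a)/\<sigma>)) * (ennreal (erlang_density 0 (1/\<sigma>) r) * g (m, t + r))"
            by (simp add: mult.assoc)
        qed
        also have "\<dots> = ennreal (exp (-(m-a)/\<sigma>)) * (\<integral>\<^sup>+r. ennreal (erlang_density 0 (1/\<sigma>) r) * g (m, t + r) \<partial>lborel)"
          by (rule nn_integral_cmult) measurable
        finally show ?thesis .
      qed
      have "(\<integral>\<^sup>+t. P1 m t \<partial>QM k \<sigma>) = ennreal (exp (-(m-a)/\<sigma>)) * (\<integral>\<^sup>+t. \<integral>\<^sup>+r. ennreal (erlang_density 0 (1/\<sigma>) r) * g (m, t + r) \<partial>lborel \<partial>QM k \<sigma>)"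
        unfolding P1e by (rule nn_integral_cmult) measurable
      also have "\<dots> = ennreal (exp (-(m-a)/\<sigma>)) * (\<integral>\<^sup>+s. g (m, s) \<partial>QM (Suc k) \<sigma>)"
      proof -
        have gm: "(\<lambda>s. g (m, s)) \<in> borel_measurable borel" by measurable
        show ?thesis by (simp add: Conv[OF k1 s gm])
      qed
      finally have "ennreal (hk k a \<sigma> m) * (\<integral>\<^sup>+t. P1 m t \<partial>QM k \<sigma>)
          = ennreal (hk k a \<sigma> m * exp (-(m-a)/\<sigma>)) * (\<integral>\<^sup>+s. g (m, s) \<partial>QM (Suc k) \<sigma>)"
        using s by (simp add: ennreal_mult hk_nonneg mult.assoc)
      also have "\<dots> = ennreal (real k / real (Suc k)) * (ennreal (hk (Suc k) a \<sigma> m) * (\<integral>\<^sup>+t. g (m,t) \<partial>QM (Suc k) \<sigma>))"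
      proof -
        have "ennreal (real k / real (Suc k) * hk (Suc k) a \<sigma> m) = ennreal (real k / real (Suc k)) * ennreal (hk (Suc k) a \<sigma> m)"
          by (rule ennreal_mult) (auto simp: hk_nonneg s)
        then show ?thesis unfolding hk_exp1[OF s] by (simp only: mult.assoc)
      qed
      finally show ?thesis .
    qed
  qed
  have kpos: "real k > 0" using k1 by simp
  have part2: "(\<integral>\<^sup>+m. ennreal (hk k a \<sigma> m) * (\<integral>\<^sup>+t. P2 m t \<partial>QM k \<sigma>) \<partial>lborel)
     = (\<integral>\<^sup>+y. ennreal (1 / real (Suc k)) * (ennreal (hk (Suc k) a \<sigma> y) * (\<integral>\<^sup>+t. g (y,t) \<partial>QM (Suc k) \<sigma>)) \<partial>lborel)"
  proof -
    define \<psi> where "\<psi> = (\<lambda>m y t. ennreal (hk k a \<sigma> m) * (ennreal (shexp_density a \<sigma> y) * indicator {..<m} y * g (y, t + real k * (m - y))))"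
    have psi_meas[measurable]: "(\<lambda>p. \<psi> (fst p) (fst (snd p)) (snd (snd p))) \<in> borel_measurable (borel \<Otimes>\<^sub>M (borel \<Otimes>\<^sub>M borel))"
      unfolding \<psi>_def by measurable
    have psi3[measurable]: "(\<lambda>p. \<psi> (fst (fst p)) (snd (fst p)) (snd p)) \<in> borel_measurable ((borel \<Otimes>\<^sub>M borel) \<Otimes>\<^sub>M borel)"
      unfolding \<psi>_def by measurable
    have psi2[measurable]: "(\<lambda>p. \<psi> m (fst p) (snd p)) \<in> borel_measurable (borel \<Otimes>\<^sub>M borel)" for m
      unfolding \<psi>_def by measurable
    define F where "F = (\<lambda>y m. ennreal (indicator {y<..} m * hk k a \<sigma> m) * (\<integral>\<^sup>+t. g (y, t + real k * (m - y)) \<partial>QM k \<sigma>))"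
    have F_meas[measurable]: "F y \<in> borel_measurable borel" for y
      unfolding F_def by measurable
    have "(\<integral>\<^sup>+m. ennreal (hk k a \<sigma> m) * (\<integral>\<^sup>+t. P2 m t \<partial>QM k \<sigma>) \<partial>lborel)
       = (\<integral>\<^sup>+m. \<integral>\<^sup>+t. \<integral>\<^sup>+y. \<psi> m y t \<partial>lborel \<partial>QM k \<sigma> \<partial>lborel)"
    proof (rule nn_integral_cong)
      fix m
      have hP2: "ennreal (hk k a \<sigma> m) * P2 m t = (\<integral>\<^sup>+y. \<psi> m y t \<partial>lborel)" for t
        unfolding P2_def \<psi>_def by (rule nn_integral_cmult[symmetric]) measurable
      then show "ennreal (hk k a \<sigma> m) * (\<integral>\<^sup>+t. P2 m t \<partial>QM k \<sigma>) = (\<integral>\<^sup>+t. \<integral>\<^sup>+y. \<psi> m y t \<partial>lborel \<partial>QM k \<sigma>)"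
      proof -
        have "(\<lambda>t. P2 m t) \<in> borel_measurable (QM k \<sigma>)" by measurable
        then show ?thesis using hP2 by (simp add: nn_integral_cmult[symmetric])
      qed
    qed
    also have "\<dots> = (\<integral>\<^sup>+m. \<integral>\<^sup>+y. \<integral>\<^sup>+t. \<psi> m y t \<partial>QM k \<sigma> \<partial>lborel \<partial>lborel)"
      by (intro nn_integral_cong QM_swap) measurable
    also have "\<dots> = (\<integral>\<^sup>+y. \<integral>\<^sup>+m. \<integral>\<^sup>+t. \<psi> m y t \<partial>QM k \<sigma> \<partial>lborel \<partial>lborel)"
      by (rule lborel_pair.Fubini'[symmetric]) measurable
    also have "\<dots> = (\<integral>\<^sup>+y. ennreal (shexp_density a \<sigma> y) * (\<integral>\<^sup>+m. F y m \<partial>lborel) \<partial>lborel)"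
    proof (rule nn_integral_cong)
      fix y
      have "(\<integral>\<^sup>+t. \<psi> m y t \<partial>QM k \<sigma>) = ennreal (shexp_density a \<sigma> y) * F y m" for m
      proof -
        have "(\<integral>\<^sup>+t. \<psi> m y t \<partial>QM k \<sigma>) = (\<integral>\<^sup>+t. (ennreal (shexp_density a \<sigma> y) * ennreal (indicator {y<..} m * hk k a \<sigma> m)) * g (y, t + real k * (m - y)) \<partial>QM k \<sigma>)"
          unfolding \<psi>_def by (intro nn_integral_cong) (auto simp: indicator_def mult_ac)
        also have "\<dots> = (ennreal (shexp_density a \<sigma> y) * ennreal (indicator {y<..} m * hk k a \<sigma> m)) * (\<integral>\<^sup>+t. g (y, t + real k * (m - y)) \<partial>QM k \<sigma>)"
          by (rule nn_integral_cmult) measurable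
        finally show ?thesis unfolding F_def by (simp add: mult.assoc)
      qed
      then show "(\<integral>\<^sup>+m. \<integral>\<^sup>+t. \<psi> m y t \<partial>QM k \<sigma> \<partial>lborel) = ennreal (shexp_density a \<sigma> y) * (\<integral>\<^sup>+m. F y m \<partial>lborel)"
        by (simp add: nn_integral_cmult)
    qed
    also have "\<dots> = (\<integral>\<^sup>+y. ennreal (1 / real (Suc k)) * (ennreal (hk (Suc k) a \<sigma> y) * (\<integral>\<^sup>+t. g (y,t) \<partial>QM (Suc k) \<sigma>)) \<partial>lborel)"
    proof (rule nn_integral_cong)
      fix y :: real
      show "ennreal (shexp_density a \<sigma> y) * (\<integral>\<^sup>+m. F y m \<partial>lborel) = ennreal (1 / real (Suc k)) * (ennreal (hk (Suc k) a \<sigma> y) * (\<integral>\<^sup>+t. g (y,t) \<partial>QM (Suc k) \<sigma>))"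
      proof (cases "a \<le> y")
        case False
        then show ?thesis by (simp add: hk_def shexp_density_def)
      next
        case True
        have gy: "(\<lambda>s. g (y, s)) \<in> borel_measurable borel" by measurable
        have "(\<integral>\<^sup>+m. F y m \<partial>lborel) = ennreal \<bar>1 / real k\<bar> * (\<integral>\<^sup>+r. F y (y + 1 / real k * r) \<partial>lborel)"
          using kpos by (intro nn_integral_real_affine) auto
        also have "(\<integral>\<^sup>+r. F y (y + 1 / real k * r) \<partial>lborel)
           = (\<integral>\<^sup>+r. ennreal (real k * exp (- real k * (y - a) / \<sigma>)) * (ennreal (erlang_density 0 (1/\<sigma>) r) * (\<integral>\<^sup>+t. g (y, t + r) \<partial>QM k \<sigma>)) \<partial>lborel)"
        proof (rule nn_integral_cong_AE)
          show "AE r in lborel. F y (y + 1 / real k * r) = ennreal (real k * exp (- real k * (y - a) / \<sigma>)) * (ennreal (erlang_density 0 (1/\<sigma>) r) * (\<integral>\<^sup>+t. g (y, t + r) \<partial>QM k \<sigma>))"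
            using AE_lborel_singleton[of 0]
          proof eventually_elim
            case (elim r)
            have e1: "real k * (y + 1 / real k * r - y) = r" using kpos by (simp add: field_simps)
            have e2: "indicator {y<..} (y + 1 / real k * r) * hk k a \<sigma> (y + 1 / real k * r) = real k * exp (- real k * (y - a) / \<sigma>) * erlang_density 0 (1/\<sigma>) r"
              using hk_shift[OF s True _ elim, of k] k1 by simp
            show ?case unfolding F_def e1 e2 using s kpos by (simp add: ennreal_mult mult.assoc)
          qed
        qed
        also have "\<dots> = ennreal (real k * exp (- real k * (y - a) / \<sigma>)) * (\<integral>\<^sup>+r. ennreal (erlang_density 0 (1/\<sigma>) r) * (\<integral>\<^sup>+t. g (y, t + r) \<partial>QM k \<sigma>) \<partial>lborel)"
          by (rule nn_integral_cmult) measurable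
        also have "(\<integral>\<^sup>+r. ennreal (erlang_density 0 (1/\<sigma>) r) * (\<integral>\<^sup>+t. g (y, t + r) \<partial>QM k \<sigma>) \<partial>lborel)
            = (\<integral>\<^sup>+r. \<integral>\<^sup>+t. ennreal (erlang_density 0 (1/\<sigma>) r) * g (y, t + r) \<partial>QM k \<sigma> \<partial>lborel)"
          by (intro nn_integral_cong nn_integral_cmult[symmetric]) measurable
        also have "\<dots> = (\<integral>\<^sup>+t. \<integral>\<^sup>+r. ennreal (erlang_density 0 (1/\<sigma>) r) * g (y, t + r) \<partial>lborel \<partial>QM k \<sigma>)"
          by (rule QM_swap[symmetric]) measurable
        also have "\<dots> = (\<integral>\<^sup>+t. g (y,t) \<partial>QM (Suc k) \<sigma>)"
          by (rule Conv[OF k1 s gy])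
        finally have "(\<integral>\<^sup>+m. F y m \<partial>lborel) = ennreal (exp (- real k * (y - a) / \<sigma>)) * (\<integral>\<^sup>+t. g (y,t) \<partial>QM (Suc k) \<sigma>)"
          using kpos by (simp add: ennreal_mult[symmetric] mult.assoc[symmetric])
        then have "ennreal (shexp_density a \<sigma> y) * (\<integral>\<^sup>+m. F y m \<partial>lborel)
            = ennreal (shexp_density a \<sigma> y * exp (- real k * (y - a) / \<sigma>)) * (\<integral>\<^sup>+t. g (y,t) \<partial>QM (Suc k) \<sigma>)"
          using s by (simp add: ennreal_mult shexp_nonneg mult.assoc)
        also have "\<dots> = ennreal (1 / real (Suc k)) * (ennreal (hk (Suc k) a \<sigma> y) * (\<integral>\<^sup>+t. g (y,t) \<partial>QM (Suc k) \<sigma>))"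
        proof -
          have "ennreal (1 / real (Suc k) * hk (Suc k) a \<sigma> y) = ennreal (1 / real (Suc k)) * ennreal (hk (Suc k) a \<sigma> y)"
            by (rule ennreal_mult) (auto simp: hk_nonneg s)
          then show ?thesis unfolding shexp_exp[OF s] by (simp only: mult.assoc)
        qed
        finally show ?thesis .
      qed
    qed
    finally show ?thesis .
  qed
  define X where "X = (\<lambda>m. ennreal (hk (Suc k) a \<sigma> m) * (\<integral>\<^sup>+t. g (m,t) \<partial>QM (Suc k) \<sigma>))"
  have X_meas[measurable]: "X \<in> borel_measurable borel" unfolding X_def by measurable
  have "(\<integral>\<^sup>+x. g (Min (x ` insert i J), \<Sum>j\<in>insert i J. (x j - Min (x ` insert i J))) \<partial>PiM (insert i J) (\<lambda>_. ?D))
     = (\<integral>\<^sup>+m. ennreal (real k / real (Suc k)) * X m \<partial>lborel) + (\<integral>\<^sup>+m. ennreal (1 / real (Suc k)) * X m \<partial>lborel)"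
    unfolding step1 step2 step4 part1 part2 X_def ..
  also have "\<dots> = (ennreal (real k / real (Suc k)) + ennreal (1 / real (Suc k))) * (\<integral>\<^sup>+m. X m \<partial>lborel)"
    by (simp add: nn_integral_cmult distrib_right)
  also have "ennreal (real k / real (Suc k)) + ennreal (1 / real (Suc k)) = 1"
    by (subst ennreal_plus[symmetric]) (auto simp: add_divide_distrib[symmetric] simp del: of_nat_Suc)
  finally show ?case unfolding cardi X_def by simp
qed



lemma pow_part:
  fixes \<sigma> v :: real and N :: nat
  assumes s: "\<sigma> > 0"
  shows "\<sigma> * \<sigma> * (\<sigma> * v) * (c / \<sigma>) * (c / \<sigma>) * ((1/\<sigma>) ^ Suc N * (\<sigma> * v) ^ N) = c^2 * v ^ Suc N"
proof -
  have "(1/\<sigma>) ^ Suc N * (\<sigma> * v) ^ N = (1/\<sigma>) * v ^ N"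
    using s by (simp add: power_mult_distrib power_one_over field_simps)
  then show ?thesis using s by (simp add: power2_eq_square field_simps)
qed

lemma KA_eq:
  fixes n :: nat and \<sigma> a b u v w :: real
  assumes n: "n \<ge> 2" and s: "\<sigma> > 0"
  shows "\<sigma> * \<sigma> * (\<sigma> * v) * hk n a \<sigma> (b + \<sigma> * u) * hk n b \<sigma> (b + \<sigma> * u + \<sigma> * v * w) * erlang_density (2*n-3) (1/\<sigma>) (\<sigma> * v)
   = (if a \<le> b + \<sigma> * u \<and> 0 \<le> u + v * w \<and> 0 \<le> v then
        real n ^ 2 * v ^ (2*n-2) * exp (- v * (1 + real n * w)) * exp (- 2 * real n * u) / fact (2*n-3) * exp (- real n * (b - a) / \<sigma>)
      else 0)"
proof -
  define N where "N = 2*n-3"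
  have N2: "2*n-2 = Suc N" using n by (simp add: N_def)
  have c1: "(b \<le> b + \<sigma> * u + \<sigma> * v * w) \<longleftrightarrow> 0 \<le> u + v * w"
  proof -
    have "b \<le> b + \<sigma> * u + \<sigma> * v * w \<longleftrightarrow> 0 \<le> \<sigma> * (u + v * w)" by (simp add: algebra_simps)
    also have "\<dots> \<longleftrightarrow> 0 \<le> u + v * w" using s by (simp add: zero_le_mult_iff)
    finally show ?thesis .
  qed
  have c2: "(\<sigma> * v < 0) \<longleftrightarrow> v < 0" using s by (simp add: mult_less_0_iff)
  have ex: "exp (- real n * (b + \<sigma> * u - a) / \<sigma>) * exp (- real n * (b + \<sigma> * u + \<sigma> * v * w - b) / \<sigma>) * exp (- (1/\<sigma>) * (\<sigma> * v))
      = exp (- v * (1 + real n * w)) * exp (- 2 * real n * u) * exp (- real n * (b - a) / \<sigma>)"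
    unfolding exp_add[symmetric] using s by (intro arg_cong[where f=exp]) (simp add: field_simps)
  show ?thesis
  proof (cases "a \<le> b + \<sigma> * u \<and> 0 \<le> u + v * w \<and> 0 \<le> v")
    case False
    then show ?thesis unfolding hk_def erlang_density_def using c1 c2 by auto
  next
    case True
    then have "\<not> \<sigma> * v < 0" using c2 by simp
    then have "\<sigma> * \<sigma> * (\<sigma> * v) * hk n a \<sigma> (b + \<sigma> * u) * hk n b \<sigma> (b + \<sigma> * u + \<sigma> * v * w) * erlang_density (2*n-3) (1/\<sigma>) (\<sigma> * v)
      = (\<sigma> * \<sigma> * (\<sigma> * v) * (real n / \<sigma>) * (real n / \<sigma>) * ((1/\<sigma>) ^ Suc N * (\<sigma> * v) ^ N)) / fact N *
        (exp (- real n * (b + \<sigma> * u - a) / \<sigma>) * exp (- real n * (b + \<sigma> * u + \<sigma> * v * w - b) / \<sigma>) * exp (- (1/\<sigma>) * (\<sigma> * v)))"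
      using True c1 unfolding hk_def erlang_density_def N_def[symmetric] by (simp add: field_simps)
    also have "\<dots> = real n ^ 2 * v ^ Suc N / fact N * (exp (- v * (1 + real n * w)) * exp (- 2 * real n * u) * exp (- real n * (b - a) / \<sigma>))"
      unfolding ex pow_part[OF s] ..
    finally show ?thesis using True unfolding N2 N_def[symmetric] by simp
  qed
qed

lemma abstract_cmp:
  fixes p u v w C E1 E2 :: real
  assumes "u \<noteq> 0" "u \<noteq> \<bar>p\<bar>" "u \<noteq> - \<bar>p\<bar>" "v \<noteq> 0" "w \<noteq> 0" "u + v * w \<noteq> 0"
    and "Em = (if p \<ge> 0 then E2 else E1)" "Ep = (if p \<ge> 0 then E1 else E2)"
  shows "(if p \<le> u \<and> 0 \<le> u + v * w \<and> 0 \<le> v then C * E1 else 0) * (if w > 0 then 1 else 0)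
       + (if - p \<le> u \<and> 0 \<le> u + v * w \<and> 0 \<le> v then C * E2 else 0) * (if w \<ge> 0 then 1 else 0)
     = (if w > 0 \<and> ((- \<bar>p\<bar> < u \<and> u < 0 \<and> - u / w < v) \<or> (0 < u \<and> u < \<bar>p\<bar> \<and> 0 < v)) then C * Em
        else if w > 0 \<and> \<bar>p\<bar> < u \<and> 0 < v then C * (Em + Ep) else 0)"
proof (cases "w > 0")
  case False
  then have "w < 0" using assms by simp
  then show ?thesis by simp
next
  case w: True
  have vw: "- u / w < v \<longleftrightarrow> 0 < u + v * w" using w by (simp add: field_simps) linarith
  show ?thesis
  proof (cases "v > 0")
    case False
    then have v: "v < 0" using assms by simp
    have "u + v * w < u" using v w by (simp add: mult_neg_pos)
    then show ?thesis using v w vw by auto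
  next
    case v: True
    have "0 < u \<Longrightarrow> 0 < u + v * w" using v w by (simp add: add_pos_pos)
    then show ?thesis using v w vw assms by (cases "p \<ge> 0") (auto simp: algebra_simps)
  qed
qed

lemma Gamma_n: "n \<ge> 2 \<Longrightarrow> Gamma (2 * (real n - 1)) = fact (2*n-3)"
proof -
  assume n: "n \<ge> 2"
  have "2 * (real n - 1) = 1 + real (2*n-3)" using n by (simp add: of_nat_diff)
  then show ?thesis by (simp only: Gamma_fact)
qed

lemma dens_cmp:
  fixes n :: nat and \<sigma> \<mu>1 \<mu>2 u v w :: real
  assumes n: "n \<ge> 2" and s: "\<sigma> > 0"
    and g: "u \<noteq> 0" "u \<noteq> mu_par n \<mu>1 \<mu>2 \<sigma> / real n" "u \<noteq> - mu_par n \<mu>1 \<mu>2 \<sigma> / real n" "v \<noteq> 0" "w \<noteq> 0" "u + v * w \<noteq> 0"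
  shows "\<sigma> * \<sigma> * (\<sigma> * v) * hk n \<mu>1 \<sigma> (\<mu>2 + \<sigma> * u) * hk n \<mu>2 \<sigma> (\<mu>2 + \<sigma> * u + \<sigma> * v * w) * erlang_density (2*n-3) (1/\<sigma>) (\<sigma> * v) * (if w > 0 then 1 else 0)
       + \<sigma> * \<sigma> * (\<sigma> * v) * hk n \<mu>2 \<sigma> (\<mu>1 + \<sigma> * u) * hk n \<mu>1 \<sigma> (\<mu>1 + \<sigma> * u + \<sigma> * v * w) * erlang_density (2*n-3) (1/\<sigma>) (\<sigma> * v) * (if w \<ge> 0 then 1 else 0)
     = cond_dens3 n (mu_par n \<mu>1 \<mu>2 \<sigma>) 1 u v w"
proof -
  define p where "p = (\<mu>1 - \<mu>2) / \<sigma>"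
  define C where "C = real n ^ 2 * v ^ (2*n-2) * exp (- v * (1 + real n * w)) * exp (- 2 * real n * u) / fact (2*n-3)"
  define \<mu> where "\<mu> = mu_par n \<mu>1 \<mu>2 \<sigma>"
  have np: "real n > 0" using n by simp
  have mm: "max \<mu>1 \<mu>2 - min \<mu>1 \<mu>2 = \<bar>\<mu>1 - \<mu>2\<bar>" by (simp add: max_def min_def abs_if)
  have mu: "\<mu> = real n * \<bar>p\<bar>" unfolding \<mu>_def mu_par_def p_def mm using s
    by (simp add: abs_div)
  have mun: "\<mu> / real n = \<bar>p\<bar>" using mu np by simp
  have c1: "\<mu>1 \<le> \<mu>2 + \<sigma> * u \<longleftrightarrow> p \<le> u" unfolding p_def using s by (simp add: pos_divide_le_eq algebra_simps)
  have mp: "- p = (\<mu>2 - \<mu>1) / \<sigma>" unfolding p_def by (metis minus_diff_eq minus_divide_left)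
  have c2: "\<mu>2 \<le> \<mu>1 + \<sigma> * u \<longleftrightarrow> - p \<le> u" unfolding mp using s by (simp add: pos_divide_le_eq algebra_simps)
  have e1: "exp (- real n * (\<mu>2 - \<mu>1) / \<sigma>) = exp (real n * p)" using s by (simp add: p_def field_simps)
  have e2: "exp (- real n * (\<mu>1 - \<mu>2) / \<sigma>) = exp (- (real n * p))" using s by (simp add: p_def field_simps)
  have Em: "exp (- \<mu>) = (if p \<ge> 0 then exp (- (real n * p)) else exp (real n * p))" unfolding mu by simp
  have Ep: "exp \<mu> = (if p \<ge> 0 then exp (real n * p) else exp (- (real n * p)))" unfolding mu by simp
  have m1: "- \<mu> / real n = - \<bar>p\<bar>" using mun by (metis minus_divide_left)
  have cd: "cond_dens3 n \<mu> 1 u v w = (if w > 0 \<and> ((- \<bar>p\<bar> < u \<and> u < 0 \<and> - u / w < v) \<or> (0 < u \<and> u < \<bar>p\<bar> \<and> 0 < v)) then C * exp (- \<mu>)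
        else if w > 0 \<and> \<bar>p\<bar> < u \<and> 0 < v then C * (exp (- \<mu>) + exp \<mu>) else 0)"
  proof -
    have cc: "real n ^ 2 / (Gamma (2 * (real n - 1)) * 1) * v ^ (2*n-2) * exp (- v * (1 + real n * w)) * exp (- 2 * real n * u) = C"
      unfolding C_def Gamma_n[OF n] by simp
    show ?thesis unfolding cond_dens3_def Let_def cc mun m1 ..
  qed
  have "u \<noteq> \<bar>p\<bar>" "u \<noteq> - \<bar>p\<bar>" using g(2,3) mun m1 unfolding \<mu>_def by auto
  note ac = abstract_cmp[of u p v w "exp (- \<mu>)" "exp (- (real n * p))" "exp (real n * p)" "exp \<mu>" C, OF g(1) this g(4,5,6) Em Ep]
  show ?thesis
    unfolding KA_eq[OF n s] c1 c2 e1 e2 \<mu>_def[symmetric] cd C_def[symmetric]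
    using ac by (simp add: mult.assoc)
qed



lemma CoV:
  fixes hA hB e :: "real \<Rightarrow> real" and Ws :: "real set" and \<mu> \<sigma> :: real
    and g :: "real \<times> real \<times> real \<Rightarrow> ennreal"
  assumes s: "\<sigma> > 0" and [measurable]: "hA \<in> borel_measurable borel" "hB \<in> borel_measurable borel"
    "e \<in> borel_measurable borel" "Ws \<in> sets borel"
    and nn: "\<And>x. hA x \<ge> 0" "\<And>x. hB x \<ge> 0" "\<And>x. e x \<ge> 0" and e0: "\<And>x. x \<le> 0 \<Longrightarrow> e x = 0"
    and g[measurable]: "g \<in> borel_measurable (borel \<Otimes>\<^sub>M borel \<Otimes>\<^sub>M borel)"
  shows "(\<integral>\<^sup>+a. \<integral>\<^sup>+b. \<integral>\<^sup>+t. ennreal (hA a * hB b * e t) * indicator Ws ((b - a) / t) * g ((a - \<mu>) / \<sigma>, t / \<sigma>, (b - a) / t) \<partial>lborel \<partial>lborel \<partial>lborel)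
   = (\<integral>\<^sup>+u. \<integral>\<^sup>+v. \<integral>\<^sup>+w. ennreal (\<sigma> * \<sigma> * (\<sigma> * v) * hA (\<mu> + \<sigma> * u) * hB (\<mu> + \<sigma> * u + \<sigma> * v * w) * e (\<sigma> * v)) * indicator Ws w * g (u, v, w) \<partial>lborel \<partial>lborel \<partial>lborel)"
proof -
  define L where "L = (\<lambda>a t w. ennreal (t * hA a * hB (a + t * w) * e t) * indicator Ws w * g ((a - \<mu>) / \<sigma>, t / \<sigma>, w))"
  have L_meas[measurable]: "(\<lambda>p. L (fst p) (fst (snd p)) (snd (snd p))) \<in> borel_measurable (borel \<Otimes>\<^sub>M borel \<Otimes>\<^sub>M borel)"
    unfolding L_def by measurable
  have L_meas2[measurable]: "(\<lambda>p. L a (fst p) (snd p)) \<in> borel_measurable (borel \<Otimes>\<^sub>M borel)" for a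
    unfolding L_def by measurable
  have L_meas4[measurable]: "(\<lambda>p. L (fst (fst p)) (\<sigma> * snd (fst p)) (snd p)) \<in> borel_measurable ((borel \<Otimes>\<^sub>M borel) \<Otimes>\<^sub>M borel)"
    unfolding L_def by measurable
  have L_meas5[measurable]: "(\<lambda>p. L (fst (fst p)) (snd (fst p)) (snd p)) \<in> borel_measurable ((borel \<Otimes>\<^sub>M borel) \<Otimes>\<^sub>M borel)"
    unfolding L_def by measurable
  have L_meas3[measurable]: "(\<lambda>p. L (fst p) (\<sigma> * fst (snd p)) (snd (snd p))) \<in> borel_measurable (borel \<Otimes>\<^sub>M borel \<Otimes>\<^sub>M borel)"
    unfolding L_def by measurable
  have "(\<integral>\<^sup>+a. \<integral>\<^sup>+b. \<integral>\<^sup>+t. ennreal (hA a * hB b * e t) * indicator Ws ((b - a) / t) * g ((a - \<mu>) / \<sigma>, t / \<sigma>, (b - a) / t) \<partial>lborel \<partial>lborel \<partial>lborel)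
      = (\<integral>\<^sup>+a. \<integral>\<^sup>+t. \<integral>\<^sup>+b. ennreal (hA a * hB b * e t) * indicator Ws ((b - a) / t) * g ((a - \<mu>) / \<sigma>, t / \<sigma>, (b - a) / t) \<partial>lborel \<partial>lborel \<partial>lborel)"
    by (intro nn_integral_cong lborel_pair.Fubini'[symmetric]) measurable
  also have "\<dots> = (\<integral>\<^sup>+a. \<integral>\<^sup>+t. \<integral>\<^sup>+w. L a t w \<partial>lborel \<partial>lborel \<partial>lborel)"
  proof (rule nn_integral_cong, rule nn_integral_cong)
    fix a t :: real
    show "(\<integral>\<^sup>+b. ennreal (hA a * hB b * e t) * indicator Ws ((b - a) / t) * g ((a - \<mu>) / \<sigma>, t / \<sigma>, (b - a) / t) \<partial>lborel) = (\<integral>\<^sup>+w. L a t w \<partial>lborel)"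
    proof (cases "t > 0")
      case False
      then show ?thesis using e0[of t] by (simp add: L_def)
    next
      case True
      have "(\<integral>\<^sup>+b. ennreal (hA a * hB b * e t) * indicator Ws ((b - a) / t) * g ((a - \<mu>) / \<sigma>, t / \<sigma>, (b - a) / t) \<partial>lborel)
        = ennreal \<bar>t\<bar> * (\<integral>\<^sup>+w. ennreal (hA a * hB (a + t * w) * e t) * indicator Ws ((a + t * w - a) / t) * g ((a - \<mu>) / \<sigma>, t / \<sigma>, (a + t * w - a) / t) \<partial>lborel)"
        using True by (intro nn_integral_real_affine) auto
      also have "\<dots> = ennreal \<bar>t\<bar> * (\<integral>\<^sup>+w. (ennreal (hA a * hB (a + t * w) * e t) * indicator Ws w * g ((a - \<mu>) / \<sigma>, t / \<sigma>, w)) \<partial>lborel)"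
        using True by simp
      also have "\<dots> = (\<integral>\<^sup>+w. ennreal \<bar>t\<bar> * (ennreal (hA a * hB (a + t * w) * e t) * indicator Ws w * g ((a - \<mu>) / \<sigma>, t / \<sigma>, w)) \<partial>lborel)"
        by (rule nn_integral_cmult[symmetric]) measurable
      also have "\<dots> = (\<integral>\<^sup>+w. L a t w \<partial>lborel)"
        unfolding L_def using True nn
        by (intro nn_integral_cong) (simp add: ennreal_mult' mult.assoc)
      finally show ?thesis .
    qed
  qed
  also have "\<dots> = (\<integral>\<^sup>+a. ennreal \<sigma> * (\<integral>\<^sup>+v. \<integral>\<^sup>+w. L a (\<sigma> * v) w \<partial>lborel \<partial>lborel) \<partial>lborel)"
  proof (intro nn_integral_cong)
    fix a
    show "(\<integral>\<^sup>+t. \<integral>\<^sup>+w. L a t w \<partial>lborel \<partial>lborel) = ennreal \<sigma> * (\<integral>\<^sup>+v. \<integral>\<^sup>+w. L a (\<sigma> * v) w \<partial>lborel \<partial>lborel)"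
      using nn_integral_real_affine[of "\<lambda>t. \<integral>\<^sup>+w. L a t w \<partial>lborel" \<sigma> 0] s by simp
  qed
  also have "\<dots> = ennreal \<sigma> * (\<integral>\<^sup>+u. ennreal \<sigma> * (\<integral>\<^sup>+v. \<integral>\<^sup>+w. L (\<mu> + \<sigma> * u) (\<sigma> * v) w \<partial>lborel \<partial>lborel) \<partial>lborel)"
    using nn_integral_real_affine[of "\<lambda>a. ennreal \<sigma> * (\<integral>\<^sup>+v. \<integral>\<^sup>+w. L a (\<sigma> * v) w \<partial>lborel \<partial>lborel)" \<sigma> \<mu>] s by simp
  also have "\<dots> = (\<integral>\<^sup>+u. ennreal \<sigma> * (ennreal \<sigma> * (\<integral>\<^sup>+v. \<integral>\<^sup>+w. L (\<mu> + \<sigma> * u) (\<sigma> * v) w \<partial>lborel \<partial>lborel)) \<partial>lborel)"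
    by (rule nn_integral_cmult[symmetric]) (unfold L_def, measurable)
  also have "\<dots> = (\<integral>\<^sup>+u. ennreal (\<sigma> * \<sigma>) * (\<integral>\<^sup>+v. \<integral>\<^sup>+w. L (\<mu> + \<sigma> * u) (\<sigma> * v) w \<partial>lborel \<partial>lborel) \<partial>lborel)"
    using s by (simp add: ennreal_mult mult.assoc)
  also have "\<dots> = (\<integral>\<^sup>+u. \<integral>\<^sup>+v. ennreal (\<sigma> * \<sigma>) * (\<integral>\<^sup>+w. L (\<mu> + \<sigma> * u) (\<sigma> * v) w \<partial>lborel) \<partial>lborel \<partial>lborel)"
    by (intro nn_integral_cong nn_integral_cmult[symmetric]) (unfold L_def, measurable)
  also have "\<dots> = (\<integral>\<^sup>+u. \<integral>\<^sup>+v. \<integral>\<^sup>+w. ennreal (\<sigma> * \<sigma>) * L (\<mu> + \<sigma> * u) (\<sigma> * v) w \<partial>lborel \<partial>lborel \<partial>lborel)"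
    by (intro nn_integral_cong nn_integral_cmult[symmetric]) (unfold L_def, measurable)
  also have "\<dots> = (\<integral>\<^sup>+u. \<integral>\<^sup>+v. \<integral>\<^sup>+w. ennreal (\<sigma> * \<sigma> * (\<sigma> * v) * hA (\<mu> + \<sigma> * u) * hB (\<mu> + \<sigma> * u + \<sigma> * v * w) * e (\<sigma> * v)) * indicator Ws w * g (u, v, w) \<partial>lborel \<partial>lborel \<partial>lborel)"
  proof (intro nn_integral_cong)
    fix u v w :: real
    show "ennreal (\<sigma> * \<sigma>) * L (\<mu> + \<sigma> * u) (\<sigma> * v) w = ennreal (\<sigma> * \<sigma> * (\<sigma> * v) * hA (\<mu> + \<sigma> * u) * hB (\<mu> + \<sigma> * u + \<sigma> * v * w) * e (\<sigma> * v)) * indicator Ws w * g (u, v, w)"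
    proof (cases "v > 0")
      case False
      then have "\<sigma> * v \<le> 0" using s by (simp add: mult_nonneg_nonpos)
      then show ?thesis using e0[of "\<sigma> * v"] by (simp add: L_def)
    next
      case True
      then show ?thesis unfolding L_def using s nn True
        by (simp add: ennreal_mult' mult.assoc mult_nonneg_nonneg mult.left_commute)
    qed
  qed
  finally show ?thesis .
qed

lemma Conv2:
  assumes n: "n \<ge> 2" and s: "\<sigma> > 0" and [measurable]: "\<phi> \<in> borel_measurable borel"
  shows "(\<integral>\<^sup>+t1. \<integral>\<^sup>+t2. \<phi> (t1 + t2) \<partial>QM n \<sigma> \<partial>QM n \<sigma>)
       = (\<integral>\<^sup>+s. ennreal (erlang_density (2*n-3) (1/\<sigma>) s) * \<phi> s \<partial>lborel)"
proof -
  let ?e = "\<lambda>t. ennreal (erlang_density (n - 2) (1/\<sigma>) t)"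
  have "(\<integral>\<^sup>+t1. \<integral>\<^sup>+t2. \<phi> (t1 + t2) \<partial>QM n \<sigma> \<partial>QM n \<sigma>)
      = (\<integral>\<^sup>+t1. \<integral>\<^sup>+t2. ?e t2 * \<phi> (t1 + t2) \<partial>lborel \<partial>QM n \<sigma>)"
    by (intro nn_integral_cong QM_integral_ge2[OF s n]) measurable
  also have "\<dots> = (\<integral>\<^sup>+t1. ?e t1 * \<integral>\<^sup>+t2. ?e t2 * \<phi> (t1 + t2) \<partial>lborel \<partial>lborel)"
    by (rule QM_integral_ge2[OF s n]) measurable
  also have "\<dots> = (\<integral>\<^sup>+t. \<integral>\<^sup>+x. ?e t * (?e (x - t) * \<phi> x) \<partial>lborel \<partial>lborel)"
  proof (rule nn_integral_cong)
    fix t :: real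
    have "(\<integral>\<^sup>+x. ?e (x - t) * \<phi> x \<partial>lborel) = (\<integral>\<^sup>+r. ?e (t + r - t) * \<phi> (t + r) \<partial>lborel)"
      using nn_integral_real_affine[of "\<lambda>x. ?e (x - t) * \<phi> x" 1 t] by simp
    then show "?e t * (\<integral>\<^sup>+r. ?e r * \<phi> (t + r) \<partial>lborel) = (\<integral>\<^sup>+x. ?e t * (?e (x - t) * \<phi> x) \<partial>lborel)"
      by (simp add: nn_integral_cmult)
  qed
  also have "\<dots> = (\<integral>\<^sup>+x. \<integral>\<^sup>+t. ?e t * (?e (x - t) * \<phi> x) \<partial>lborel \<partial>lborel)"
    by (rule lborel_pair.Fubini'[symmetric]) measurable
  also have "\<dots> = (\<integral>\<^sup>+x. ennreal (erlang_density (2*n-3) (1/\<sigma>) x) * \<phi> x \<partial>lborel)"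
  proof (rule nn_integral_cong)
    fix x :: real
    have "(\<integral>\<^sup>+t. ?e t * (?e (x - t) * \<phi> x) \<partial>lborel) = (\<integral>\<^sup>+t. ?e (x - t) * ?e t \<partial>lborel) * \<phi> x"
      by (subst nn_integral_multc[symmetric]) (auto intro!: nn_integral_cong simp: mult_ac)
    also have "\<dots> = ennreal (erlang_density (Suc (n-2) + Suc (n - 2) - 1) (1/\<sigma>) x) * \<phi> x"
      using convolution_erlang_density[of "1/\<sigma>" "n-2" "n-2"] s by (simp add: fun_eq_iff)
    also have "Suc (n-2) + Suc (n - 2) - 1 = 2*n-3" using n by simp
    finally show "(\<integral>\<^sup>+t. ?e t * (?e (x - t) * \<phi> x) \<partial>lborel) = ennreal (erlang_density (2*n-3) (1/\<sigma>) x) * \<phi> x" .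
  qed
  finally show ?thesis .
qed



definition T4f :: "real \<Rightarrow> real \<Rightarrow> real \<Rightarrow> real \<Rightarrow> real \<Rightarrow> real \<Rightarrow> real \<times> real \<times> real" where
  "T4f \<mu>1 \<mu>2 \<sigma> m1 m2 t = ((min m1 m2 - (\<mu>1 * (if m2 \<le> m1 then 1 else 0) + \<mu>2 * (if m1 < m2 then 1 else 0))) / \<sigma>,
      t / \<sigma>, (max m1 m2 - min m1 m2) / t)"


lemma T4f_raw[measurable (raw)]:
  assumes [measurable]: "f \<in> borel_measurable M" "h \<in> borel_measurable M" "k \<in> borel_measurable M"
  shows "(\<lambda>x. T4f \<mu>1 \<mu>2 \<sigma> (f x) (h x) (k x)) \<in> measurable (M::'z measure) (borel \<Otimes>\<^sub>M borel \<Otimes>\<^sub>M borel)"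
  unfolding T4f_def by measurable

lemma split_T4f:
  fixes m1 m2 t :: real and g :: "real \<times> real \<times> real \<Rightarrow> ennreal"
  assumes "t > 0"
  shows "g (T4f \<mu>1 \<mu>2 \<sigma> m1 m2 t) = indicator {0<..} ((m2 - m1) / t) * g ((m1 - \<mu>2) / \<sigma>, t / \<sigma>, (m2 - m1) / t)
      + indicator {0..} ((m1 - m2) / t) * g ((m2 - \<mu>1) / \<sigma>, t / \<sigma>, (m1 - m2) / t)"
proof (cases "m1 < m2")
  case True
  then have "\<not> 0 \<le> (m1 - m2) / t" "0 < (m2 - m1) / t" using assms by (auto simp: divide_nonneg_pos zero_le_divide_iff)
  then show ?thesis using True by (simp add: T4f_def indicator_def min_def max_def)
next
  case False
  then have "0 \<le> (m1 - m2) / t" "\<not> 0 < (m2 - m1) / t" using assms by (auto simp: zero_less_divide_iff)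
  then show ?thesis using False by (simp add: T4f_def indicator_def min_def max_def)
qed

lemma erl_zero: "n \<ge> 2 \<Longrightarrow> x \<le> 0 \<Longrightarrow> erlang_density (2*n-3) l x = 0"
  by (cases "x = 0") (auto simp: erlang_density_def)

lemma Phi1:
  fixes g :: "real \<times> real \<times> real \<Rightarrow> ennreal"
  assumes n: "n \<ge> 2" and s: "\<sigma> > 0" and g[measurable]: "g \<in> borel_measurable (borel \<Otimes>\<^sub>M borel \<Otimes>\<^sub>M borel)"
  shows "(\<integral>\<^sup>+m1. ennreal (hk n \<mu>1 \<sigma> m1) * (\<integral>\<^sup>+t1. \<integral>\<^sup>+m2. ennreal (hk n \<mu>2 \<sigma> m2) * (\<integral>\<^sup>+t2. g (T4f \<mu>1 \<mu>2 \<sigma> m1 m2 (t1 + t2)) \<partial>QM n \<sigma>) \<partial>lborel \<partial>QM n \<sigma>) \<partial>lborel)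
   = (\<integral>\<^sup>+m1. \<integral>\<^sup>+m2. \<integral>\<^sup>+t. ennreal (hk n \<mu>1 \<sigma> m1 * hk n \<mu>2 \<sigma> m2 * erlang_density (2*n-3) (1/\<sigma>) t) * g (T4f \<mu>1 \<mu>2 \<sigma> m1 m2 t) \<partial>lborel \<partial>lborel \<partial>lborel)"
proof (rule nn_integral_cong)
  fix m1 :: real
  let ?h1 = "hk n \<mu>1 \<sigma> m1"
  let ?h2 = "hk n \<mu>2 \<sigma>"
  let ?e = "erlang_density (2*n-3) (1/\<sigma>)"
  have "(\<integral>\<^sup>+t1. \<integral>\<^sup>+m2. ennreal (?h2 m2) * (\<integral>\<^sup>+t2. g (T4f \<mu>1 \<mu>2 \<sigma> m1 m2 (t1 + t2)) \<partial>QM n \<sigma>) \<partial>lborel \<partial>QM n \<sigma>)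
     = (\<integral>\<^sup>+t1. \<integral>\<^sup>+m2. \<integral>\<^sup>+t2. ennreal (?h2 m2) * g (T4f \<mu>1 \<mu>2 \<sigma> m1 m2 (t1 + t2)) \<partial>QM n \<sigma> \<partial>lborel \<partial>QM n \<sigma>)"
    by (intro nn_integral_cong nn_integral_cmult[symmetric]) measurable
  also have "\<dots> = (\<integral>\<^sup>+m2. \<integral>\<^sup>+t1. \<integral>\<^sup>+t2. ennreal (?h2 m2) * g (T4f \<mu>1 \<mu>2 \<sigma> m1 m2 (t1 + t2)) \<partial>QM n \<sigma> \<partial>QM n \<sigma> \<partial>lborel)"
    by (rule QM_swap) measurable
  also have "\<dots> = (\<integral>\<^sup>+m2. \<integral>\<^sup>+t. ennreal (?e t) * (ennreal (?h2 m2) * g (T4f \<mu>1 \<mu>2 \<sigma> m1 m2 t)) \<partial>lborel \<partial>lborel)"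
  proof (rule nn_integral_cong)
    fix m2
    have "(\<lambda>t. ennreal (?h2 m2) * g (T4f \<mu>1 \<mu>2 \<sigma> m1 m2 t)) \<in> borel_measurable borel" by measurable
    from Conv2[OF n s this] show "(\<integral>\<^sup>+t1. \<integral>\<^sup>+t2. ennreal (?h2 m2) * g (T4f \<mu>1 \<mu>2 \<sigma> m1 m2 (t1 + t2)) \<partial>QM n \<sigma> \<partial>QM n \<sigma>)
      = (\<integral>\<^sup>+t. ennreal (?e t) * (ennreal (?h2 m2) * g (T4f \<mu>1 \<mu>2 \<sigma> m1 m2 t)) \<partial>lborel)" .
  qed
  finally have eq1: "(\<integral>\<^sup>+t1. \<integral>\<^sup>+m2. ennreal (?h2 m2) * (\<integral>\<^sup>+t2. g (T4f \<mu>1 \<mu>2 \<sigma> m1 m2 (t1 + t2)) \<partial>QM n \<sigma>) \<partial>lborel \<partial>QM n \<sigma>)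
     = (\<integral>\<^sup>+m2. \<integral>\<^sup>+t. ennreal (?e t) * (ennreal (?h2 m2) * g (T4f \<mu>1 \<mu>2 \<sigma> m1 m2 t)) \<partial>lborel \<partial>lborel)" .
  have "ennreal ?h1 * (\<integral>\<^sup>+m2. \<integral>\<^sup>+t. ennreal (?e t) * (ennreal (?h2 m2) * g (T4f \<mu>1 \<mu>2 \<sigma> m1 m2 t)) \<partial>lborel \<partial>lborel)
     = (\<integral>\<^sup>+m2. ennreal ?h1 * (\<integral>\<^sup>+t. ennreal (?e t) * (ennreal (?h2 m2) * g (T4f \<mu>1 \<mu>2 \<sigma> m1 m2 t)) \<partial>lborel) \<partial>lborel)"
    by (rule nn_integral_cmult[symmetric]) measurable
  also have "\<dots> = (\<integral>\<^sup>+m2. \<integral>\<^sup>+t. ennreal ?h1 * (ennreal (?e t) * (ennreal (?h2 m2) * g (T4f \<mu>1 \<mu>2 \<sigma> m1 m2 t))) \<partial>lborel \<partial>lborel)"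
    by (intro nn_integral_cong nn_integral_cmult[symmetric]) measurable
  also have "\<dots> = (\<integral>\<^sup>+m2. \<integral>\<^sup>+t. ennreal (?h1 * ?h2 m2 * ?e t) * g (T4f \<mu>1 \<mu>2 \<sigma> m1 m2 t) \<partial>lborel \<partial>lborel)"
    using s by (intro nn_integral_cong) (simp add: ennreal_mult' hk_nonneg mult_ac)
  finally show "ennreal ?h1 * (\<integral>\<^sup>+t1. \<integral>\<^sup>+m2. ennreal (?h2 m2) * (\<integral>\<^sup>+t2. g (T4f \<mu>1 \<mu>2 \<sigma> m1 m2 (t1 + t2)) \<partial>QM n \<sigma>) \<partial>lborel \<partial>QM n \<sigma>)
     = (\<integral>\<^sup>+m2. \<integral>\<^sup>+t. ennreal (?h1 * ?h2 m2 * ?e t) * g (T4f \<mu>1 \<mu>2 \<sigma> m1 m2 t) \<partial>lborel \<partial>lborel)"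
    unfolding eq1 .
qed

lemma Phi2:
  fixes g :: "real \<times> real \<times> real \<Rightarrow> ennreal"
  assumes n: "n \<ge> 2" and s: "\<sigma> > 0" and g[measurable]: "g \<in> borel_measurable (borel \<Otimes>\<^sub>M borel \<Otimes>\<^sub>M borel)"
  shows "(\<integral>\<^sup>+m1. \<integral>\<^sup>+m2. \<integral>\<^sup>+t. ennreal (hk n \<mu>1 \<sigma> m1 * hk n \<mu>2 \<sigma> m2 * erlang_density (2*n-3) (1/\<sigma>) t) * g (T4f \<mu>1 \<mu>2 \<sigma> m1 m2 t) \<partial>lborel \<partial>lborel \<partial>lborel)
   = (\<integral>\<^sup>+u. \<integral>\<^sup>+v. \<integral>\<^sup>+w. ennreal (cond_dens3 n (mu_par n \<mu>1 \<mu>2 \<sigma>) 1 u v w) * g (u, v, w) \<partial>lborel \<partial>lborel \<partial>lborel)"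
proof -
  let ?h1 = "hk n \<mu>1 \<sigma>"
  let ?h2 = "hk n \<mu>2 \<sigma>"
  let ?e = "erlang_density (2*n-3) (1/\<sigma>)"
  define A where "A = (\<lambda>m1 m2 t. ennreal (?h1 m1 * ?h2 m2 * ?e t) * indicator {0<..} ((m2 - m1) / t) * g ((m1 - \<mu>2) / \<sigma>, t / \<sigma>, (m2 - m1) / t))"
  define B where "B = (\<lambda>m1 m2 t. ennreal (?h2 m2 * ?h1 m1 * ?e t) * indicator {0..} ((m1 - m2) / t) * g ((m2 - \<mu>1) / \<sigma>, t / \<sigma>, (m1 - m2) / t))"
  have Am1[measurable]: "(\<lambda>p. A (fst p) (fst (snd p)) (snd (snd p))) \<in> borel_measurable (borel \<Otimes>\<^sub>M borel \<Otimes>\<^sub>M borel)" unfolding A_def by measurable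
  have Am2[measurable]: "(\<lambda>p. A (fst (fst p)) (snd (fst p)) (snd p)) \<in> borel_measurable ((borel \<Otimes>\<^sub>M borel) \<Otimes>\<^sub>M borel)" unfolding A_def by measurable
  have Am3[measurable]: "(\<lambda>p. A m1 (fst p) (snd p)) \<in> borel_measurable (borel \<Otimes>\<^sub>M borel)" for m1 unfolding A_def by measurable
  have Am4[measurable]: "A m1 m2 \<in> borel_measurable borel" for m1 m2 unfolding A_def by measurable
  have Bm1[measurable]: "(\<lambda>p. B (fst p) (fst (snd p)) (snd (snd p))) \<in> borel_measurable (borel \<Otimes>\<^sub>M borel \<Otimes>\<^sub>M borel)" unfolding B_def by measurable
  have Bm2[measurable]: "(\<lambda>p. B (fst (fst p)) (snd (fst p)) (snd p)) \<in> borel_measurable ((borel \<Otimes>\<^sub>M borel) \<Otimes>\<^sub>M borel)" unfolding B_def by measurable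
  have Bm2'[measurable]: "(\<lambda>p. B (snd (fst p)) (fst (fst p)) (snd p)) \<in> borel_measurable ((borel \<Otimes>\<^sub>M borel) \<Otimes>\<^sub>M borel)" unfolding B_def by measurable
  have Bm3[measurable]: "(\<lambda>p. B m1 (fst p) (snd p)) \<in> borel_measurable (borel \<Otimes>\<^sub>M borel)" for m1 unfolding B_def by measurable
  have Bm4[measurable]: "B m1 m2 \<in> borel_measurable borel" for m1 m2 unfolding B_def by measurable
  define X where "X = (\<lambda>u v w. ennreal (\<sigma> * \<sigma> * (\<sigma> * v) * ?h1 (\<mu>2 + \<sigma> * u) * ?h2 (\<mu>2 + \<sigma> * u + \<sigma> * v * w) * ?e (\<sigma> * v)) * indicator {0<..} w * g (u, v, w))"
  define Y where "Y = (\<lambda>u v w. ennreal (\<sigma> * \<sigma> * (\<sigma> * v) * ?h2 (\<mu>1 + \<sigma> * u) * ?h1 (\<mu>1 + \<sigma> * u + \<sigma> * v * w) * ?e (\<sigma> * v)) * indicator {0..} w * g (u, v, w))"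
  have Xm2[measurable]: "(\<lambda>p. X (fst (fst p)) (snd (fst p)) (snd p)) \<in> borel_measurable ((borel \<Otimes>\<^sub>M borel) \<Otimes>\<^sub>M borel)" unfolding X_def by measurable
  have Xm3[measurable]: "(\<lambda>p. X u (fst p) (snd p)) \<in> borel_measurable (borel \<Otimes>\<^sub>M borel)" for u unfolding X_def by measurable
  have Xm4[measurable]: "X u v \<in> borel_measurable borel" for u v unfolding X_def by measurable
  have Ym2[measurable]: "(\<lambda>p. Y (fst (fst p)) (snd (fst p)) (snd p)) \<in> borel_measurable ((borel \<Otimes>\<^sub>M borel) \<Otimes>\<^sub>M borel)" unfolding Y_def by measurable
  have Ym3[measurable]: "(\<lambda>p. Y u (fst p) (snd p)) \<in> borel_measurable (borel \<Otimes>\<^sub>M borel)" for u unfolding Y_def by measurable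
  have Ym4[measurable]: "Y u v \<in> borel_measurable borel" for u v unfolding Y_def by measurable
  have "(\<integral>\<^sup>+m1. \<integral>\<^sup>+m2. \<integral>\<^sup>+t. ennreal (?h1 m1 * ?h2 m2 * ?e t) * g (T4f \<mu>1 \<mu>2 \<sigma> m1 m2 t) \<partial>lborel \<partial>lborel \<partial>lborel)
     = (\<integral>\<^sup>+m1. \<integral>\<^sup>+m2. \<integral>\<^sup>+t. A m1 m2 t + B m1 m2 t \<partial>lborel \<partial>lborel \<partial>lborel)"
  proof (intro nn_integral_cong)
    fix m1 m2 t :: real
    show "ennreal (?h1 m1 * ?h2 m2 * ?e t) * g (T4f \<mu>1 \<mu>2 \<sigma> m1 m2 t) = A m1 m2 t + B m1 m2 t"
    proof (cases "t > 0")
      case True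
      then show ?thesis unfolding A_def B_def split_T4f[OF True, of g] by (simp add: distrib_left mult_ac)
    next
      case False
      then show ?thesis unfolding A_def B_def using erl_zero[OF n, of t] by simp
    qed
  qed
  also have "\<dots> = (\<integral>\<^sup>+m1. \<integral>\<^sup>+m2. \<integral>\<^sup>+t. A m1 m2 t \<partial>lborel \<partial>lborel \<partial>lborel) + (\<integral>\<^sup>+m1. \<integral>\<^sup>+m2. \<integral>\<^sup>+t. B m1 m2 t \<partial>lborel \<partial>lborel \<partial>lborel)"
  proof -
    have "(\<integral>\<^sup>+m1. \<integral>\<^sup>+m2. \<integral>\<^sup>+t. A m1 m2 t + B m1 m2 t \<partial>lborel \<partial>lborel \<partial>lborel)
       = (\<integral>\<^sup>+m1. \<integral>\<^sup>+m2. (\<integral>\<^sup>+t. A m1 m2 t \<partial>lborel) + (\<integral>\<^sup>+t. B m1 m2 t \<partial>lborel) \<partial>lborel \<partial>lborel)"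
      by (intro nn_integral_cong nn_integral_add) measurable
    also have "\<dots> = (\<integral>\<^sup>+m1. (\<integral>\<^sup>+m2. \<integral>\<^sup>+t. A m1 m2 t \<partial>lborel \<partial>lborel) + (\<integral>\<^sup>+m2. \<integral>\<^sup>+t. B m1 m2 t \<partial>lborel \<partial>lborel) \<partial>lborel)"
      by (intro nn_integral_cong nn_integral_add) measurable
    also have "\<dots> = (\<integral>\<^sup>+m1. \<integral>\<^sup>+m2. \<integral>\<^sup>+t. A m1 m2 t \<partial>lborel \<partial>lborel \<partial>lborel) + (\<integral>\<^sup>+m1. \<integral>\<^sup>+m2. \<integral>\<^sup>+t. B m1 m2 t \<partial>lborel \<partial>lborel \<partial>lborel)"
      by (intro nn_integral_add) measurable
    finally show ?thesis .
  qed
  also have "(\<integral>\<^sup>+m1. \<integral>\<^sup>+m2. \<integral>\<^sup>+t. B m1 m2 t \<partial>lborel \<partial>lborel \<partial>lborel) = (\<integral>\<^sup>+m2. \<integral>\<^sup>+m1. \<integral>\<^sup>+t. B m1 m2 t \<partial>lborel \<partial>lborel \<partial>lborel)"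
    by (rule lborel_pair.Fubini'[symmetric]) measurable
  also have "(\<integral>\<^sup>+m1. \<integral>\<^sup>+m2. \<integral>\<^sup>+t. A m1 m2 t \<partial>lborel \<partial>lborel \<partial>lborel)
     = (\<integral>\<^sup>+u. \<integral>\<^sup>+v. \<integral>\<^sup>+w. X u v w \<partial>lborel \<partial>lborel \<partial>lborel)"
    unfolding A_def X_def by (rule CoV) (use s n erl_zero in \<open>auto simp: hk_nonneg\<close>)
  also have "(\<integral>\<^sup>+m2. \<integral>\<^sup>+m1. \<integral>\<^sup>+t. B m1 m2 t \<partial>lborel \<partial>lborel \<partial>lborel)
     = (\<integral>\<^sup>+u. \<integral>\<^sup>+v. \<integral>\<^sup>+w. Y u v w \<partial>lborel \<partial>lborel \<partial>lborel)"
    unfolding B_def Y_def by (rule CoV) (use s n erl_zero in \<open>auto simp: hk_nonneg\<close>)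
  also have "(\<integral>\<^sup>+u. \<integral>\<^sup>+v. \<integral>\<^sup>+w. X u v w \<partial>lborel \<partial>lborel \<partial>lborel) + (\<integral>\<^sup>+u. \<integral>\<^sup>+v. \<integral>\<^sup>+w. Y u v w \<partial>lborel \<partial>lborel \<partial>lborel)
     = (\<integral>\<^sup>+u. \<integral>\<^sup>+v. \<integral>\<^sup>+w. X u v w + Y u v w \<partial>lborel \<partial>lborel \<partial>lborel)"
  proof -
    have "(\<integral>\<^sup>+u. \<integral>\<^sup>+v. \<integral>\<^sup>+w. X u v w + Y u v w \<partial>lborel \<partial>lborel \<partial>lborel)
       = (\<integral>\<^sup>+u. \<integral>\<^sup>+v. (\<integral>\<^sup>+w. X u v w \<partial>lborel) + (\<integral>\<^sup>+w. Y u v w \<partial>lborel) \<partial>lborel \<partial>lborel)"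
      by (intro nn_integral_cong nn_integral_add) measurable
    also have "\<dots> = (\<integral>\<^sup>+u. (\<integral>\<^sup>+v. \<integral>\<^sup>+w. X u v w \<partial>lborel \<partial>lborel) + (\<integral>\<^sup>+v. \<integral>\<^sup>+w. Y u v w \<partial>lborel \<partial>lborel) \<partial>lborel)"
      by (intro nn_integral_cong nn_integral_add) measurable
    also have "\<dots> = (\<integral>\<^sup>+u. \<integral>\<^sup>+v. \<integral>\<^sup>+w. X u v w \<partial>lborel \<partial>lborel \<partial>lborel) + (\<integral>\<^sup>+u. \<integral>\<^sup>+v. \<integral>\<^sup>+w. Y u v w \<partial>lborel \<partial>lborel \<partial>lborel)"
      by (intro nn_integral_add) measurable
    finally show ?thesis by simp
  qed
  also have "\<dots> = (\<integral>\<^sup>+u. \<integral>\<^sup>+v. \<integral>\<^sup>+w. ennreal (cond_dens3 n (mu_par n \<mu>1 \<mu>2 \<sigma>) 1 u v w) * g (u, v, w) \<partial>lborel \<partial>lborel \<partial>lborel)"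
  proof (rule nn_integral_cong_AE)
    let ?m = "mu_par n \<mu>1 \<mu>2 \<sigma>"
    have "AE u in lborel. u \<noteq> 0 \<and> u \<noteq> ?m / real n \<and> u \<noteq> - ?m / real n"
      using AE_lborel_singleton[of 0] AE_lborel_singleton[of "?m / real n"] AE_lborel_singleton[of "- ?m / real n"]
      by eventually_elim auto
    then show "AE u in lborel. (\<integral>\<^sup>+v. \<integral>\<^sup>+w. X u v w + Y u v w \<partial>lborel \<partial>lborel) = (\<integral>\<^sup>+v. \<integral>\<^sup>+w. ennreal (cond_dens3 n ?m 1 u v w) * g (u, v, w) \<partial>lborel \<partial>lborel)"
    proof eventually_elim
      case (elim u)
      show ?case
      proof (rule nn_integral_cong_AE)
        show "AE v in lborel. (\<integral>\<^sup>+w. X u v w + Y u v w \<partial>lborel) = (\<integral>\<^sup>+w. ennreal (cond_dens3 n ?m 1 u v w) * g (u, v, w) \<partial>lborel)"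
          using AE_lborel_singleton[of 0]
        proof eventually_elim
          case (elim v)
          show ?case
          proof (rule nn_integral_cong_AE)
            show "AE w in lborel. X u v w + Y u v w = ennreal (cond_dens3 n ?m 1 u v w) * g (u, v, w)"
              using AE_lborel_singleton[of 0] AE_lborel_singleton[of "- u / v"]
            proof eventually_elim
              case (elim w)
              have uvw: "u + v * w \<noteq> 0"
              proof
                assume "u + v * w = 0"
                then have "w = - u / v" using \<open>v \<noteq> 0\<close> by (simp add: field_simps)
                then show False using elim by simp
              qed
              define KA where "KA = \<sigma> * \<sigma> * (\<sigma> * v) * ?h1 (\<mu>2 + \<sigma> * u) * ?h2 (\<mu>2 + \<sigma> * u + \<sigma> * v * w) * ?e (\<sigma> * v)"
              define KB where "KB = \<sigma> * \<sigma> * (\<sigma> * v) * ?h2 (\<mu>1 + \<sigma> * u) * ?h1 (\<mu>1 + \<sigma> * u + \<sigma> * v * w) * ?e (\<sigma> * v)"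
              have KA0: "KA \<ge> 0" unfolding KA_def KA_eq[OF n s] by (auto intro!: mult_nonneg_nonneg divide_nonneg_nonneg)
              have KB0: "KB \<ge> 0" unfolding KB_def KA_eq[OF n s] by (auto intro!: mult_nonneg_nonneg divide_nonneg_nonneg)
              have cmp: "KA * (if w > 0 then 1 else 0) + KB * (if w \<ge> 0 then 1 else 0) = cond_dens3 n ?m 1 u v w"
                unfolding KA_def KB_def using dens_cmp[OF n s, of u \<mu>1 \<mu>2 v w] elim \<open>u \<noteq> 0 \<and> _\<close> \<open>v \<noteq> 0\<close> uvw by simp
              show ?case
              proof (cases "w > 0")
                case True
                then have "cond_dens3 n ?m 1 u v w = KA + KB" using cmp by simp
                then show ?thesis unfolding X_def Y_def KA_def[symmetric] KB_def[symmetric] using True KA0 KB0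
                  by (simp add: ennreal_plus distrib_right)
              next
                case False
                then have "w < 0" using elim by simp
                then have "cond_dens3 n ?m 1 u v w = 0" using cmp by simp
                then show ?thesis unfolding X_def Y_def using \<open>w < 0\<close> by simp
              qed
            qed
          qed
        qed
      qed
    qed
  qed
  finally show ?thesis .
qed



lemma main_id:
  fixes M :: "'a measure" and X :: "nat \<Rightarrow> nat \<Rightarrow> 'a \<Rightarrow> real"
    and n :: nat and \<mu>1 \<mu>2 \<sigma> :: real and g :: "real \<times> real \<times> real \<Rightarrow> ennreal"
  assumes P: "prob_space M"
    and n: "n \<ge> 2"
    and s: "\<sigma> > 0"
    and ind: "prob_space.indep_vars M (\<lambda>_. borel) (\<lambda>(i, j). X i j) ({1,2} \<times> {1..n})"
    and d1: "\<And>j. j \<in> {1..n} \<Longrightarrow> distributed M lborel (X 1 j) (\<lambda>x. ennreal (shexp_density \<mu>1 \<sigma> x))"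
    and d2: "\<And>j. j \<in> {1..n} \<Longrightarrow> distributed M lborel (X 2 j) (\<lambda>x. ennreal (shexp_density \<mu>2 \<sigma> x))"
    and g[measurable]: "g \<in> borel_measurable (borel \<Otimes>\<^sub>M borel \<Otimes>\<^sub>M borel)"
  shows "(\<integral>\<^sup>+\<omega>. g (Uprime X n \<mu>1 \<mu>2 \<sigma> \<omega>, Vstat X n \<sigma> \<omega>, Wstat X n \<omega>) \<partial>M)
       = (\<integral>\<^sup>+u. \<integral>\<^sup>+v. \<integral>\<^sup>+w. ennreal (cond_dens3 n (mu_par n \<mu>1 \<mu>2 \<sigma>) 1 u v w) * g (u, v, w) \<partial>lborel \<partial>lborel \<partial>lborel)"
proof -
  interpret prob_space M by (rule P)
  define I where "I = ({1,2} \<times> {1..n} :: (nat \<times> nat) set)"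
  define J1 where "J1 = ({1} \<times> {1..n} :: (nat \<times> nat) set)"
  define J2 where "J2 = ({2} \<times> {1..n} :: (nat \<times> nat) set)"
  have IJ: "I = J1 \<union> J2" "J1 \<inter> J2 = {}" "finite J1" "finite J2" "J1 \<noteq> {}" "J2 \<noteq> {}"
    using n by (auto simp: I_def J1_def J2_def)
  have cardJ: "card J1 = n" "card J2 = n"
    unfolding J1_def J2_def by (simp_all add: card_cartesian_product)
  define D where "D = (\<lambda>a. density lborel (\<lambda>x. ennreal (shexp_density a \<sigma> x)))"
  define Dp where "Dp = (\<lambda>p::nat \<times> nat. D (if fst p = 1 then \<mu>1 else \<mu>2))"
  have n1: "1 \<in> {1..n}" using n by simp
  have distr1: "distr M lborel (X 1 j) = D \<mu>1" if "j \<in> {1..n}" for j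
    using distributed_distr_eq_density[OF d1[OF that]] by (simp add: D_def)
  have distr2: "distr M lborel (X 2 j) = D \<mu>2" if "j \<in> {1..n}" for j
    using distributed_distr_eq_density[OF d2[OF that]] by (simp add: D_def)
  have PD1: "prob_space (D \<mu>1)" using distr1[OF n1] distributed_measurable[OF d1[OF n1]]
    by (metis prob_space_distr)
  have PD2: "prob_space (D \<mu>2)" using distr2[OF n1] distributed_measurable[OF d2[OF n1]]
    by (metis prob_space_distr)
  have rv: "random_variable borel ((\<lambda>(i, j). X i j) p)" if "p \<in> I" for p
  proof -
    obtain i j where p: "p = (i, j)" "i \<in> {1,2}" "j \<in> {1..n}" using \<open>p \<in> I\<close> by (auto simp: I_def)
    show ?thesis using p distributed_measurable[OF d1[OF p(3)]] distributed_measurable[OF d2[OF p(3)]] by auto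
  qed
  have Ine: "I \<noteq> {}" using n by (auto simp: I_def)
  have PiM_eq: "distr M (PiM I (\<lambda>_. borel)) (\<lambda>\<omega>. \<lambda>p\<in>I. (\<lambda>(i, j). X i j) p \<omega>) = PiM I (\<lambda>p. distr M borel ((\<lambda>(i, j). X i j) p))"
    using indep_vars_iff_distr_eq_PiM'[where I=I and M'="\<lambda>_. borel" and X="\<lambda>(i, j). X i j", OF _ rv] ind Ine unfolding I_def by blast
  also have "\<dots> = PiM I Dp"
  proof (rule PiM_cong)
    fix p assume "p \<in> I"
    then obtain i j where p: "p = (i, j)" "i \<in> {1,2}" "j \<in> {1..n}" by (auto simp: I_def)
    have "distr M borel (X i j) = distr M lborel (X i j)" by (rule distr_cong) auto
    then show "distr M borel ((\<lambda>(i, j). X i j) p) = Dp p"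
      using p distr1[OF p(3)] distr2[OF p(3)] by (auto simp: Dp_def)
  qed simp
  finally have PiM_eq: "distr M (PiM I (\<lambda>_. borel)) (\<lambda>\<omega>. \<lambda>p\<in>I. (\<lambda>(i, j). X i j) p \<omega>) = PiM I Dp" .
  define Xv where "Xv = (\<lambda>\<omega>. \<lambda>p\<in>I. (\<lambda>(i, j). X i j) p \<omega>)"
  define T where "T = (\<lambda>x::nat \<times> nat \<Rightarrow> real. T4f \<mu>1 \<mu>2 \<sigma> (Min (x ` J1)) (Min (x ` J2))
      ((\<Sum>p\<in>J1. (x p - Min (x ` J1))) + (\<Sum>p\<in>J2. (x p - Min (x ` J2)))))"
  have sumJ: "(\<Sum>p\<in>{i}\<times>{1..n}. f p) = (\<Sum>j=1..n. f (i, j))" for i and f :: "nat \<times> nat \<Rightarrow> real"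
  proof -
    have "{i}\<times>{1..n} = Pair i ` {1..n}" by auto
    then show ?thesis by (simp add: sum.reindex inj_on_def)
  qed
  have Y_eq: "(Uprime X n \<mu>1 \<mu>2 \<sigma> \<omega>, Vstat X n \<sigma> \<omega>, Wstat X n \<omega>) = T (Xv \<omega>)" for \<omega>
  proof -
    have img: "Xv \<omega> ` ({i} \<times> {1..n}) = (\<lambda>j. X i j \<omega>) ` {1..n}" if "i \<in> {1,2}" for i
      using that by (force simp: Xv_def I_def image_iff)
    have xm: "Xmin X n i \<omega> = Min (Xv \<omega> ` ({i} \<times> {1..n}))" if "i \<in> {1,2}" for i
      unfolding Xmin_def img[OF that] ..
    have sm: "(\<Sum>j=1..n. (X i j \<omega> - Xmin X n i \<omega>)) = (\<Sum>p\<in>{i}\<times>{1..n}. (Xv \<omega> p - Min (Xv \<omega> ` ({i} \<times> {1..n}))))" if "i \<in> {1,2}" for i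
      unfolding sumJ xm[OF that, symmetric] using that by (intro sum.cong) (auto simp: Xv_def I_def)
    show ?thesis
      unfolding T_def Uprime_def Vstat_def Wstat_def Z1_def Z2_def muM_def Sstat_def J1_def J2_def
      using xm[of 1] xm[of 2] sm[of 1] sm[of 2] by (simp add: T4f_def)
  qed
  have Xv_meas: "Xv \<in> measurable M (PiM I (\<lambda>_. borel))"
    unfolding Xv_def by (rule measurable_restrict) (use rv in auto)
  have setsDp: "sets (Dp p) = sets borel" for p by (simp add: Dp_def D_def)
  have compD[measurable]: "(\<lambda>x. x p) \<in> borel_measurable (PiM I Dp)" if "p \<in> I" for p
    using measurable_component_singleton[OF that, of Dp] unfolding measurable_cong_sets[OF refl setsDp] .
  have compB[measurable]: "(\<lambda>x. x p) \<in> borel_measurable (PiM I (\<lambda>_. borel))" if "p \<in> I" for p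
    using measurable_component_singleton[OF that, of "\<lambda>_. borel"] by simp
  have JI: "J1 \<subseteq> I" "J2 \<subseteq> I" using IJ by auto
  have T_measD: "T \<in> measurable (PiM I Dp) (borel \<Otimes>\<^sub>M borel \<Otimes>\<^sub>M borel)"
  proof -
    have [measurable]: "(\<lambda>x. Min ((\<lambda>p. x p) ` J)) \<in> borel_measurable (PiM I Dp)" if "J \<subseteq> I" "finite J" for J
      using that by (intro borel_measurable_Min) auto
    have [measurable]: "(\<lambda>x. \<Sum>p\<in>J. (x p - Min ((\<lambda>p. x p) ` J))) \<in> borel_measurable (PiM I Dp)" if "J \<subseteq> I" "finite J" for J
      using that by (intro borel_measurable_sum borel_measurable_diff) auto
    show ?thesis unfolding T_def using JI IJ by measurable
  qed
  have T_measB: "T \<in> measurable (PiM I (\<lambda>_. borel)) (borel \<Otimes>\<^sub>M borel \<Otimes>\<^sub>M borel)"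
    using T_measD by (simp add: measurable_cong_sets[OF sets_PiM_cong[OF refl setsDp] refl])
  have "(\<integral>\<^sup>+\<omega>. g (Uprime X n \<mu>1 \<mu>2 \<sigma> \<omega>, Vstat X n \<sigma> \<omega>, Wstat X n \<omega>) \<partial>M) = (\<integral>\<^sup>+\<omega>. g (T (Xv \<omega>)) \<partial>M)"
    unfolding Y_eq ..
  also have "\<dots> = (\<integral>\<^sup>+x. g (T x) \<partial>distr M (PiM I (\<lambda>_. borel)) Xv)"
    using Xv_meas T_measB by (intro nn_integral_distr[symmetric]) auto
  also have "\<dots> = (\<integral>\<^sup>+x. g (T x) \<partial>PiM I Dp)"
    using PiM_eq unfolding Xv_def by simp
  also have "\<dots> = (\<integral>\<^sup>+x1. \<integral>\<^sup>+x2. g (T (merge J1 J2 (x1, x2))) \<partial>PiM J2 Dp \<partial>PiM J1 Dp)"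
  proof -
    interpret ps: product_sigma_finite Dp
      unfolding product_sigma_finite_def Dp_def using PD1 PD2 by (auto simp: prob_space_imp_sigma_finite)
    note [measurable] = T_measD[unfolded IJ(1)]
    show ?thesis unfolding IJ(1)
      by (intro ps.product_nn_integral_fold IJ(2,3,4)) measurable
  qed
  also have "\<dots> = (\<integral>\<^sup>+x1. \<integral>\<^sup>+x2. g (T4f \<mu>1 \<mu>2 \<sigma> (Min (x1 ` J1)) (Min (x2 ` J2))
      ((\<Sum>p\<in>J1. (x1 p - Min (x1 ` J1))) + (\<Sum>p\<in>J2. (x2 p - Min (x2 ` J2))))) \<partial>PiM J2 (\<lambda>_. D \<mu>2) \<partial>PiM J1 (\<lambda>_. D \<mu>1))"
  proof -
    have e1: "PiM J1 Dp = PiM J1 (\<lambda>_. D \<mu>1)" by (rule PiM_cong) (auto simp: Dp_def J1_def)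
    have e2: "PiM J2 Dp = PiM J2 (\<lambda>_. D \<mu>2)" by (rule PiM_cong) (auto simp: Dp_def J2_def)
    have m1: "merge J1 J2 (x1, x2) ` J1 = x1 ` J1" for x1 x2 :: "nat \<times> nat \<Rightarrow> real"
      by (auto simp: merge_def)
    have m2: "merge J1 J2 (x1, x2) ` J2 = x2 ` J2" for x1 x2 :: "nat \<times> nat \<Rightarrow> real"
      using IJ(2) by (force simp: merge_def image_iff)
    have s1: "(\<Sum>p\<in>J1. (merge J1 J2 (x1, x2) p - c)) = (\<Sum>p\<in>J1. (x1 p - c))" for x1 x2 :: "nat \<times> nat \<Rightarrow> real" and c
      by (intro sum.cong) (auto simp: merge_def)
    have s2: "(\<Sum>p\<in>J2. (merge J1 J2 (x1, x2) p - c)) = (\<Sum>p\<in>J2. (x2 p - c))" for x1 x2 :: "nat \<times> nat \<Rightarrow> real" and c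
      using IJ(2) by (intro sum.cong) (auto simp: merge_def)
    show ?thesis unfolding e1 e2 T_def m1 m2 s1 s2 ..
  qed
  also have "\<dots> = (\<integral>\<^sup>+m1. ennreal (hk n \<mu>1 \<sigma> m1) * (\<integral>\<^sup>+t1. \<integral>\<^sup>+m2. ennreal (hk n \<mu>2 \<sigma> m2) * (\<integral>\<^sup>+t2. g (T4f \<mu>1 \<mu>2 \<sigma> m1 m2 (t1 + t2)) \<partial>QM n \<sigma>) \<partial>lborel \<partial>QM n \<sigma>) \<partial>lborel)"
  proof -
    define \<Psi> where "\<Psi> = (\<lambda>(m1, t1). \<integral>\<^sup>+m2. ennreal (hk n \<mu>2 \<sigma> m2) * (\<integral>\<^sup>+t2. g (T4f \<mu>1 \<mu>2 \<sigma> m1 m2 (t1 + t2)) \<partial>QM n \<sigma>) \<partial>lborel)"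
    have \<Psi>m: "\<Psi> \<in> borel_measurable (borel \<Otimes>\<^sub>M borel)" unfolding \<Psi>_def by measurable
    have inner: "(\<integral>\<^sup>+x2. g (T4f \<mu>1 \<mu>2 \<sigma> m1 (Min (x2 ` J2)) (t1 + (\<Sum>p\<in>J2. (x2 p - Min (x2 ` J2))))) \<partial>PiM J2 (\<lambda>_. D \<mu>2)) = \<Psi> (m1, t1)" for m1 t1
    proof -
      have gm: "(\<lambda>(m2, t2). g (T4f \<mu>1 \<mu>2 \<sigma> m1 m2 (t1 + t2))) \<in> borel_measurable (borel \<Otimes>\<^sub>M borel)" by measurable
      from lemA[OF IJ(4) IJ(6) s PD2[unfolded D_def] gm] show ?thesis unfolding D_def \<Psi>_def cardJ by simp
    qed
    have "(\<integral>\<^sup>+x1. \<integral>\<^sup>+x2. g (T4f \<mu>1 \<mu>2 \<sigma> (Min (x1 ` J1)) (Min (x2 ` J2))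
      ((\<Sum>p\<in>J1. (x1 p - Min (x1 ` J1))) + (\<Sum>p\<in>J2. (x2 p - Min (x2 ` J2))))) \<partial>PiM J2 (\<lambda>_. D \<mu>2) \<partial>PiM J1 (\<lambda>_. D \<mu>1))
      = (\<integral>\<^sup>+x1. \<Psi> (Min (x1 ` J1), \<Sum>p\<in>J1. (x1 p - Min (x1 ` J1))) \<partial>PiM J1 (\<lambda>_. D \<mu>1))"
      by (intro nn_integral_cong inner)
    also have "\<dots> = (\<integral>\<^sup>+m1. ennreal (hk n \<mu>1 \<sigma> m1) * (\<integral>\<^sup>+t1. \<Psi> (m1, t1) \<partial>QM n \<sigma>) \<partial>lborel)"
      using lemA[OF IJ(3) IJ(5) s PD1[unfolded D_def] \<Psi>m] unfolding D_def cardJ by simp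
    finally show ?thesis unfolding \<Psi>_def by simp
  qed
  also have "\<dots> = (\<integral>\<^sup>+u. \<integral>\<^sup>+v. \<integral>\<^sup>+w. ennreal (cond_dens3 n (mu_par n \<mu>1 \<mu>2 \<sigma>) 1 u v w) * g (u, v, w) \<partial>lborel \<partial>lborel \<partial>lborel)"
    unfolding Phi1[OF n s g] Phi2[OF n s g] ..
  finally show ?thesis .
qed



lemma scale_aux2: "(f::real) \<noteq> 0 \<Longrightarrow> a / (G * f) * X * f = a / (G * 1) * X"
  by (cases "G = 0") (simp_all add: field_simps)

lemma scale_aux: "(f::real) \<noteq> 0 \<Longrightarrow> a / (G * f) * R * E * f = a / (G * 1) * R * E"
  by (cases "G = 0") (simp_all add: field_simps)

lemma cd_factor: "cond_dens3 n \<mu> f u v w = real n ^ 2 / (Gamma (2 * (real n - 1)) * f) *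
   (v ^ (2*n - 2) * exp (- v * (1 + real n * w)) * exp (- 2 * real n * u) *
    (if w > 0 \<and> ((- \<mu> / real n < u \<and> u < 0 \<and> - u / w < v) \<or> (0 < u \<and> u < \<mu> / real n \<and> 0 < v))
        then exp (- \<mu>)
        else if w > 0 \<and> \<mu> / real n < u \<and> 0 < v
        then exp (- \<mu>) + exp \<mu>
        else 0))"
  unfolding cond_dens3_def Let_def by (auto simp: mult.assoc)

lemma cond_scale: "f \<noteq> 0 \<Longrightarrow> cond_dens3 n \<mu> f u v w * f = cond_dens3 n \<mu> 1 u v w"
  unfolding cd_factor[of n \<mu> f] cd_factor[of n \<mu> 1] by (rule scale_aux2)

lemma iter_to_N:
  fixes H :: "real \<times> real \<times> real \<Rightarrow> ennreal"
  assumes [measurable]: "H \<in> borel_measurable (borel \<Otimes>\<^sub>M borel \<Otimes>\<^sub>M borel)"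
  shows "(\<integral>\<^sup>+u. \<integral>\<^sup>+v. \<integral>\<^sup>+w. H (u, v, w) \<partial>lborel \<partial>lborel \<partial>lborel) = (\<integral>\<^sup>+z. H z \<partial>(lborel \<Otimes>\<^sub>M lborel \<Otimes>\<^sub>M lborel))"
proof -
  have sf: "sigma_finite_measure (lborel \<Otimes>\<^sub>M (lborel :: real measure))"
    by (intro sigma_finite_pair_measure) (rule lborel.sigma_finite_measure_axioms)+
  have "(\<integral>\<^sup>+u. \<integral>\<^sup>+v. \<integral>\<^sup>+w. H (u, v, w) \<partial>lborel \<partial>lborel \<partial>lborel) = (\<integral>\<^sup>+u. \<integral>\<^sup>+p. H (u, p) \<partial>(lborel \<Otimes>\<^sub>M lborel) \<partial>lborel)"
    by (intro nn_integral_cong lborel.nn_integral_fst) measurable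
  also have "\<dots> = (\<integral>\<^sup>+z. H z \<partial>(lborel \<Otimes>\<^sub>M lborel \<Otimes>\<^sub>M lborel))"
    by (rule sigma_finite_measure.nn_integral_fst[OF sf]) measurable
  finally show ?thesis .
qed

theorem lemma4p2:
  fixes M :: "'a measure" and X :: "nat \<Rightarrow> nat \<Rightarrow> 'a \<Rightarrow> real"
    and n :: nat and \<mu>1 \<mu>2 \<sigma> :: real and f1 :: "real \<Rightarrow> real"
  assumes "prob_space M"
    and "n \<ge> 2"
    and "\<sigma> > 0"
    and "prob_space.indep_vars M (\<lambda>_. borel) (\<lambda>(i, j). X i j) ({1,2} \<times> {1..n})"
    and "\<And>j. j \<in> {1..n} \<Longrightarrow> distributed M lborel (X 1 j) (\<lambda>x. ennreal (shexp_density \<mu>1 \<sigma> x))"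
    and "\<And>j. j \<in> {1..n} \<Longrightarrow> distributed M lborel (X 2 j) (\<lambda>x. ennreal (shexp_density \<mu>2 \<sigma> x))"
    and "\<And>w. f1 w \<ge> 0"
    and "distributed M lborel (Wstat X n) (\<lambda>w. ennreal (f1 w))"
  shows "distributed M (lborel \<Otimes>\<^sub>M lborel \<Otimes>\<^sub>M lborel)
           (\<lambda>\<omega>. (Uprime X n \<mu>1 \<mu>2 \<sigma> \<omega>, Vstat X n \<sigma> \<omega>, Wstat X n \<omega>))
           (\<lambda>(u, v, w). ennreal (cond_dens3 n (mu_par n \<mu>1 \<mu>2 \<sigma>) (f1 w) u v w * f1 w))"
proof -
  note P = assms(1) and n = assms(2) and s = assms(3) and ind = assms(4) and d1 = assms(5) and d2 = assms(6)
    and f1nn = assms(7) and dW = assms(8)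
  interpret prob_space M by (rule P)
  let ?N = "lborel \<Otimes>\<^sub>M lborel \<Otimes>\<^sub>M (lborel :: real measure)"
  let ?Y = "\<lambda>\<omega>. (Uprime X n \<mu>1 \<mu>2 \<sigma> \<omega>, Vstat X n \<sigma> \<omega>, Wstat X n \<omega>)"
  let ?m = "mu_par n \<mu>1 \<mu>2 \<sigma>"
  define F where "F = (\<lambda>(u, v, w). ennreal (cond_dens3 n ?m (f1 w) u v w * f1 w))"
  define C1 where "C1 = (\<lambda>z::real \<times> real \<times> real. ennreal (cond_dens3 n ?m 1 (fst z) (fst (snd z)) (snd (snd z))))"
  have sN: "sets ?N = sets (borel \<Otimes>\<^sub>M borel \<Otimes>\<^sub>M borel)"
    by (intro sets_pair_measure_cong) auto
  have Xm[measurable]: "X i j \<in> borel_measurable M" if "i \<in> {1,2}" "j \<in> {1..n}" for i j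
    using that distributed_measurable[OF d1[OF that(2)]] distributed_measurable[OF d2[OF that(2)]] by auto
  have Xminm[measurable]: "Xmin X n i \<in> borel_measurable M" if "i \<in> {1,2}" for i
    unfolding Xmin_def using that by (intro borel_measurable_Min) auto
  have Sm[measurable]: "Sstat X n \<in> borel_measurable M"
    unfolding Sstat_def using Xm Xminm by (intro borel_measurable_sum borel_measurable_diff) auto
  have Ym: "?Y \<in> measurable M (borel \<Otimes>\<^sub>M borel \<Otimes>\<^sub>M borel)"
    unfolding Uprime_def Vstat_def Wstat_def Z1_def Z2_def muM_def using Xminm[of 1] Xminm[of 2] by measurable
  have YmN: "?Y \<in> measurable M ?N" using Ym measurable_cong_sets[OF refl sN] by simp
  have f1m[measurable]: "f1 \<in> borel_measurable borel"
  proof -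
    have "(\<lambda>x. enn2real (ennreal (f1 x))) \<in> borel_measurable borel"
      using distributed_borel_measurable[OF dW] by measurable
    then show ?thesis using f1nn by simp
  qed
  have Fm: "F \<in> borel_measurable (borel \<Otimes>\<^sub>M borel \<Otimes>\<^sub>M borel)"
    unfolding F_def cond_dens3_def Let_def by measurable
  have C1m[measurable]: "C1 \<in> borel_measurable (borel \<Otimes>\<^sub>M borel \<Otimes>\<^sub>M borel)"
    unfolding C1_def cond_dens3_def Let_def by measurable
  have key: "(\<integral>\<^sup>+\<omega>. g (?Y \<omega>) \<partial>M) = (\<integral>\<^sup>+z. C1 z * g z \<partial>?N)"
    if [measurable]: "g \<in> borel_measurable (borel \<Otimes>\<^sub>M borel \<Otimes>\<^sub>M borel)" for g
  proof -
    have "(\<integral>\<^sup>+\<omega>. g (?Y \<omega>) \<partial>M) = (\<integral>\<^sup>+u. \<integral>\<^sup>+v. \<integral>\<^sup>+w. ennreal (cond_dens3 n ?m 1 u v w) * g (u, v, w) \<partial>lborel \<partial>lborel \<partial>lborel)"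
      by (rule main_id[OF P n s ind d1 d2]) measurable
    also have "\<dots> = (\<integral>\<^sup>+z. C1 z * g z \<partial>?N)"
    proof -
      have "(\<lambda>z. C1 z * g z) \<in> borel_measurable (borel \<Otimes>\<^sub>M borel \<Otimes>\<^sub>M borel)" by measurable
      from iter_to_N[OF this] show ?thesis by (simp add: C1_def)
    qed
    finally show ?thesis .
  qed
  define B where "B = {w. f1 w = 0}"
  have Bm[measurable]: "B \<in> sets borel" unfolding B_def by measurable
  have AE0: "AE z in ?N. C1 z * indicator B (snd (snd z)) = 0"
  proof -
    have "(\<integral>\<^sup>+z. C1 z * indicator B (snd (snd z)) \<partial>?N) = (\<integral>\<^sup>+\<omega>. indicator B (Wstat X n \<omega>) \<partial>M)"
      using key[of "\<lambda>z. indicator B (snd (snd z))"] by simp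
    also have "\<dots> = (\<integral>\<^sup>+w. indicator B w \<partial>distr M lborel (Wstat X n))"
      using distributed_measurable[OF dW] by (intro nn_integral_distr[symmetric]) auto
    also have "\<dots> = (\<integral>\<^sup>+w. indicator B w \<partial>density lborel (\<lambda>w. ennreal (f1 w)))"
      unfolding distributed_distr_eq_density[OF dW] ..
    also have "\<dots> = (\<integral>\<^sup>+w. ennreal (f1 w) * indicator B w \<partial>lborel)"
      by (rule nn_integral_density) auto
    also have "\<dots> = 0"
    proof -
      have z: "ennreal (f1 w) * indicator B w = 0" for w by (auto simp: B_def indicator_def)
      show ?thesis by (simp only: z) simp
    qed
    finally have z0: "(\<integral>\<^sup>+z. C1 z * indicator B (snd (snd z)) \<partial>?N) = 0" .
    have "(\<lambda>z. C1 z * indicator B (snd (snd z))) \<in> borel_measurable (borel \<Otimes>\<^sub>M borel \<Otimes>\<^sub>M borel)" by measurable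
    then have m: "(\<lambda>z. C1 z * indicator B (snd (snd z))) \<in> borel_measurable ?N"
      unfolding measurable_cong_sets[OF sN refl] .
    show ?thesis using nn_integral_0_iff_AE[OF m] z0 by simp
  qed
  have FC: "(\<integral>\<^sup>+z. F z * indicator A z \<partial>?N) = (\<integral>\<^sup>+z. C1 z * indicator A z \<partial>?N)" if "A \<in> sets ?N" for A
  proof (rule nn_integral_cong_AE)
    show "AE z in ?N. F z * indicator A z = C1 z * indicator A z"
      using AE0
    proof eventually_elim
      case (elim z)
      obtain u v w where z: "z = (u, v, w)" by (cases z) auto
      show ?case
      proof (cases "f1 w = 0")
        case True
        then have "C1 z = 0" using elim z by (simp add: B_def)
        then show ?thesis using True z by (simp add: F_def)
      next
        case False
        then show ?thesis using z by (simp add: F_def C1_def cond_scale)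
      qed
    qed
  qed
  have "distr M ?N ?Y = density ?N F"
  proof (rule measure_eqI)
    show "sets (distr M ?N ?Y) = sets (density ?N F)" by simp
    fix A assume "A \<in> sets (distr M ?N ?Y)"
    then have A: "A \<in> sets ?N" by simp
    then have Ab[measurable]: "A \<in> sets (borel \<Otimes>\<^sub>M borel \<Otimes>\<^sub>M borel)" using sN by simp
    have "emeasure (distr M ?N ?Y) A = (\<integral>\<^sup>+z. indicator A z \<partial>distr M ?N ?Y)" by simp
    also have "\<dots> = (\<integral>\<^sup>+\<omega>. indicator A (?Y \<omega>) \<partial>M)"
      using YmN A by (intro nn_integral_distr) auto
    also have "\<dots> = (\<integral>\<^sup>+z. C1 z * indicator A z \<partial>?N)" by (rule key) measurable
    also have "\<dots> = (\<integral>\<^sup>+z. F z * indicator A z \<partial>?N)" using FC[OF A] by simp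
    also have "\<dots> = emeasure (density ?N F) A"
      using Fm A measurable_cong_sets[OF sN refl] by (simp add: emeasure_density)
    finally show "emeasure (distr M ?N ?Y) A = emeasure (density ?N F) A" .
  qed
  then show ?thesis
    unfolding distributed_def F_def[symmetric] using YmN Fm measurable_cong_sets[OF sN refl] by simp
qed

end
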